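(* $\mathcal{LE}(\mathbb{C})=4/\pi$, where $\mathbb{C}$ is regarded as the real Banach space $\mathbb{R}^2$ with the Euclidean norm.
   Context: For a function $f$ from a subset $X$ of a metric space $(Z,\rho)$ into a Banach space $V$, $L(f)=\sup\{\|f(x)-f(y)\|/\rho(x,y): x\neq y\}$. $\mathcal{LE}(V)$ is the infimum of the constants $c$ such that for every metric space $(Z,\rho)$, every $X\subseteq Z$ and every $f:X\to V$ there is an extension $g:Z\to V$ of $f$ with $L(g)\le cL(f)$. *)

theory Defs
  imports "HOL-Analysis.Analysis"
begin

text \<open>Lipschitz constant L(f) of f : X \<rightarrow> V w.r.t. the metric rho, as an extended
  nonnegative real (supremum over the empty set is 0; unbounded ratios give \<infinity>).\<close>
definition Lip :: "('z \<Rightarrow> 'z \<Rightarrow> real) \<Rightarrow> 'z set \<Rightarrow> ('z \<Rightarrow> 'v::real_normed_vector) \<Rightarrow> ennreal" where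
  "Lip rho X f = (SUP p \<in> {(x, y). x \<in> X \<and> y \<in> X \<and> x \<noteq> y}.
       ennreal (norm (f (fst p) - f (snd p)) / rho (fst p) (snd p)))"

definition LE_const :: "'z itself \<Rightarrow> 'v::real_normed_vector itself \<Rightarrow> real \<Rightarrow> bool" where
  "LE_const _ _ c \<longleftrightarrow>
     (\<forall>(Z::'z set) rho (X::'z set) (f::'z \<Rightarrow> 'v).
        Metric_space Z rho \<and> X \<subseteq> Z \<longrightarrow>
        (\<exists>g. (\<forall>x\<in>X. g x = f x) \<and> Lip rho Z g \<le> ennreal c * Lip rho X f))"

text \<open>LE(V), with metric spaces ranging over those carried by the type 'z.\<close>
definition LE :: "'z itself \<Rightarrow> 'v::real_normed_vector itself \<Rightarrow> real" where
  "LE tz tv = Inf {c. 0 \<le> c \<and> LE_const tz tv c}"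

end

theory Submission
  imports Defs "HOL-Real_Asymp.Real_Asymp"
begin


definition Tf :: "nat \<Rightarrow> int \<Rightarrow> complex" where
  "Tf N j = of_real (sgn (cos ((real_of_int j + 1/2) * (pi / real N)))) * cis ((real_of_int j + 1/2) * (pi / real N))"

lemma Tf_periodic:
  assumes "N > 0"
  shows "Tf N (j + int N) = Tf N j"
proof -
  have e: "(real_of_int (j + int N) + 1/2) * (pi / real N) = (real_of_int j + 1/2) * (pi / real N) + pi"
    using assms by (simp add: field_simps)
  show ?thesis unfolding Tf_def e
    by (simp add: cis_mult[symmetric] sgn_minus)
qed

lemma Tf_shift_sum:
  assumes "N > 0"
  shows "(\<Sum>i<N. Tf N (a + int i)) = (\<Sum>i<N. Tf N (b + int i))"
proof -
  define S where "S a = (\<Sum>i<N. Tf N (a + int i))" for a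
  have step: "S (a + 1) = S a" for a
  proof -
    have "S (a+1) = (\<Sum>i<N. Tf N (a + int (Suc i)))" unfolding S_def by (simp add: ac_simps)
    also have "\<dots> = (\<Sum>i<Suc N. Tf N (a + int i)) - Tf N a"
      by (subst sum.lessThan_Suc_shift) simp
    also have "\<dots> = S a + Tf N (a + int N) - Tf N a" unfolding S_def by simp
    also have "Tf N (a + int N) = Tf N a" using Tf_periodic[OF assms] .
    finally show ?thesis by simp
  qed
  have "S a = S 0" for a
  proof (induction a rule: int_induct[where k=0])
    case base then show ?case by simp
  next
    case (step1 i) then show ?case using step[of i] by simp
  next
    case (step2 i) then show ?case using step[of "i - 1"] by simp
  qed
  then show ?thesis unfolding S_def by metis
qed

lemma cis_telescope_sum:
  fixes h :: real
  shows "(\<Sum>i<n. cis ((a + real i + 1/2) * h)) * (2 * \<i> * sin (h/2)) = cis ((a + real n) * h) - cis (a * h)"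
proof -
  have t: "cis ((a + real i + 1/2) * h) * (2 * \<i> * sin (h/2)) = cis ((a + real (Suc i)) * h) - cis ((a + real i) * h)" for i
  proof -
    have "2 * \<i> * complex_of_real (sin (h/2)) = cis (h/2) - cis (-(h/2))"
      by (simp add: complex_eq_iff cis.sel)
    then have "cis ((a + real i + 1/2) * h) * (2 * \<i> * sin (h/2)) = cis ((a + real i + 1/2) * h) * (cis (h/2) - cis (-(h/2)))" by simp
    also have "\<dots> = cis ((a + real i + 1/2) * h + h/2) - cis ((a + real i + 1/2) * h + -(h/2))"
      by (simp add: algebra_simps cis_mult)
    also have "\<dots> = cis ((a + real (Suc i)) * h) - cis ((a + real i) * h)"
      by (simp add: algebra_simps)
    finally show ?thesis .
  qed
  have "(\<Sum>i<n. cis ((a + real i + 1/2) * h)) * (2 * \<i> * sin (h/2)) = (\<Sum>i<n. cis ((a + real (Suc i)) * h) - cis ((a + real i) * h))"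
    by (simp add: sum_distrib_right t)
  also have "\<dots> = cis ((a + real n) * h) - cis ((a + real 0) * h)"
    by (rule sum_lessThan_telescope)
  finally show ?thesis by simp
qed

lemma Tf_sum:
  assumes "N = 2 * m" "m > 0"
  shows "(\<Sum>i<N. Tf N (a + int i)) = complex_of_real (1 / sin (pi / real N / 2))"
proof -
  let ?h = "pi / real N"
  have hpos: "?h > 0" using assms by simp
  have s0: "sin (?h/2) > 0"
    apply (rule sin_gt_zero) using assms by (auto simp: field_simps)
  have "(\<Sum>i<N. Tf N (a + int i)) = (\<Sum>i<N. Tf N (- int m + int i))"
    using Tf_shift_sum[of N a "- int m"] assms by simp
  also have "\<dots> = (\<Sum>i<N. cis ((- real m + real i + 1/2) * ?h))"
  proof (rule sum.cong[OF refl])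
    fix i assume "i \<in> {..<N}"
    then have i: "i < 2*m" using assms by simp
    have "cos ((real_of_int (- int m + int i) + 1/2) * ?h) > 0"
    proof (rule cos_gt_zero_pi)
      define x where "x = real i - real m + 1/2"
      have eq: "(real_of_int (- int m + int i) + 1/2) * ?h = x * (pi / (2 * real m))"
        using assms by (simp add: x_def)
      have x1: "- (real m) < x" "x < real m" using i by (auto simp: x_def)
      have mp: "real m > 0" using assms by simp
      have "- (real m) * (pi / (2 * real m)) < x * (pi / (2 * real m))"
        by (rule mult_strict_right_mono[OF x1(1)]) (use mp in simp)
      moreover have "x * (pi / (2 * real m)) < real m * (pi / (2 * real m))"
        by (rule mult_strict_right_mono[OF x1(2)]) (use mp in simp)
      ultimately show "- (pi/2) < (real_of_int (- int m + int i) + 1/2) * ?h"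
           "(real_of_int (- int m + int i) + 1/2) * ?h < pi/2"
        unfolding eq using mp by auto
    qed
    then show "Tf N (- int m + int i) = cis ((- real m + real i + 1/2) * ?h)"
      unfolding Tf_def by simp
  qed
  also have "\<dots> = (cis ((- real m + real N) * ?h) - cis ((- real m) * ?h)) / (2 * \<i> * sin (?h/2))"
    using cis_telescope_sum[where n=N and a="- real m" and h="?h"] s0
    by (simp add: eq_divide_eq)
  also have "(- real m + real N) * ?h = pi/2" using assms by (simp add: field_simps)
  also have "(- real m) * ?h = - (pi/2)" using assms by (simp add: field_simps)
  finally show ?thesis using s0 by (simp add: complex_eq_iff cis.sel)
qed

lemma sum_lessThan_add_split:
  fixes f :: "nat \<Rightarrow> 'a::comm_monoid_add"
  shows "(\<Sum>i<n + k. f i) = (\<Sum>i<n. f i) + (\<Sum>i<k. f (n + i))"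
  by (induction k) (simp_all add: add.assoc)

lemma Tf_C1:
  assumes "N = 2 * m" "m > 0"
  shows "(\<Sum>i<N. of_real (sgn (cos ((real i - real k + 1/2) * (pi / real N)))) * cis ((real i + 1/2) * (pi / real N)))
       = cis (real k * (pi / real N)) * complex_of_real (1 / sin (pi / real N / 2))"
proof -
  have "(\<Sum>i<N. of_real (sgn (cos ((real i - real k + 1/2) * (pi / real N)))) * cis ((real i + 1/2) * (pi / real N)))
      = (\<Sum>i<N. cis (real k * (pi / real N)) * Tf N (- int k + int i))"
    by (rule sum.cong[OF refl]) (simp add: Tf_def cis_mult algebra_simps)
  also have "\<dots> = cis (real k * (pi / real N)) * (\<Sum>i<N. Tf N (- int k + int i))"
    by (simp add: sum_distrib_left)
  also have "(\<Sum>i<N. Tf N (- int k + int i)) = complex_of_real (1 / sin (pi / real N / 2))"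
    by (rule Tf_sum[OF assms])
  finally show ?thesis .
qed

lemma Re_Tf: "Re (Tf N j) = \<bar>cos ((real_of_int j + 1/2) * (pi / real N))\<bar>"
  unfolding Tf_def by (simp add: cis.sel sgn_real_def)

lemma Tf_C2:
  assumes "N = 2 * m" "m > 0"
  shows "(\<Sum>i<2*N. \<bar>cos ((real_of_int a + real i + 1/2) * (pi / real N))\<bar>) = 2 / sin (pi / real N / 2)"
proof -
  have "(\<Sum>i<2*N. \<bar>cos ((real_of_int a + real i + 1/2) * (pi / real N))\<bar>) = Re (\<Sum>i<2*N. Tf N (a + int i))"
    by (simp add: Re_Tf Re_sum)
  also have "(\<Sum>i<2*N. Tf N (a + int i)) = (\<Sum>i<N. Tf N (a + int i)) + (\<Sum>i<N. Tf N ((a + int N) + int i))"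
    unfolding mult_2 sum_lessThan_add_split by (simp add: ac_simps)
  also have "\<dots> = 2 * complex_of_real (1 / sin (pi / real N / 2))"
    using Tf_sum[OF assms, of a] Tf_sum[OF assms, of "a + int N"] by simp
  finally show ?thesis by simp
qed

lemma abs_cos_le: "\<bar>cos (x::real)\<bar> \<le> \<bar>cos y\<bar> + \<bar>x - y\<bar>"
proof -
  have "\<bar>cos x - cos y\<bar> = 2 * \<bar>sin ((x + y) / 2)\<bar> * \<bar>sin ((y - x) / 2)\<bar>"
    by (simp add: cos_diff_cos abs_mult)
  also have "\<dots> \<le> 2 * 1 * \<bar>(y - x) / 2\<bar>"
    by (intro mult_mono abs_sin_x_le_abs_x) auto
  also have "\<dots> = \<bar>x - y\<bar>" by simp
  finally show ?thesis by linarith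
qed

lemma Tf_C3:
  assumes "N = 2 * m" "m > 0"
  shows "(\<Sum>j<2*N. \<bar>cos (real j * (pi / real N) - \<alpha>)\<bar>) \<le> 2 / sin (pi / real N / 2) + pi"
proof -
  define h where "h = pi / real N"
  have hpos: "h > 0" using assms by (simp add: h_def)
  define q where "q = \<lfloor>\<alpha> / h\<rfloor>"
  define \<rho> where "\<rho> = \<alpha> - real_of_int q * h"
  have q1: "real_of_int q \<le> \<alpha> / h" "\<alpha> / h < real_of_int q + 1" unfolding q_def by linarith+
  have "real_of_int q * h \<le> \<alpha>" using q1(1) hpos by (simp add: pos_le_divide_eq)
  then have r0: "0 \<le> \<rho>" unfolding \<rho>_def by simp
  have "\<alpha> < (real_of_int q + 1) * h" using q1(2) hpos by (simp add: pos_divide_less_eq)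
  then have r1: "\<rho> < h" unfolding \<rho>_def by (simp add: algebra_simps)
  let ?h = "pi / real N"
  have hh: "?h = h" by (simp add: h_def)
  have "(\<Sum>j<2*N. \<bar>cos (real j * ?h - \<alpha>)\<bar>) \<le> (\<Sum>j<2*N. \<bar>cos ((real_of_int (-q-1) + real j + 1/2) * ?h)\<bar> + ?h/2)"
  proof (rule sum_mono)
    fix j assume "j \<in> {..<2*N}"
    have "\<bar>(real j * ?h - \<alpha>) - (real_of_int (-q-1) + real j + 1/2) * ?h\<bar> = \<bar>?h/2 - \<rho>\<bar>"
      unfolding \<rho>_def hh by (simp add: algebra_simps)
    also have "\<dots> \<le> ?h/2" unfolding hh using r0 r1 by (simp only: abs_le_iff) linarith
    finally show "\<bar>cos (real j * ?h - \<alpha>)\<bar> \<le> \<bar>cos ((real_of_int (-q-1) + real j + 1/2) * ?h)\<bar> + ?h/2"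
      using abs_cos_le[of "real j * ?h - \<alpha>" "(real_of_int (-q-1) + real j + 1/2) * ?h"] by linarith
  qed
  also have "\<dots> = 2 / sin (?h / 2) + real (2*N) * (?h/2)"
    unfolding sum.distrib Tf_C2[OF assms] by simp
  also have "real (2*N) * (?h/2) = pi" using assms by simp
  finally show ?thesis .
qed

lemma frame_identity:
  assumes "N \<ge> 2"
  shows "(\<Sum>j<2*N. (w \<bullet> cis (real j * (pi / real N))) *\<^sub>R cis (real j * (pi / real N))) = of_nat N * w"
proof -
  let ?h = "pi / real N"
  have tm: "(w \<bullet> cis (real j * ?h)) *\<^sub>R cis (real j * ?h) = w / 2 + cnj w / 2 * (cis (2 * pi / real N)) ^ j" for j
  proof -
    have "(cis (2 * pi / real N)) ^ j = cis (real j * (2 * pi / real N))"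
      by (simp only: Complex.DeMoivre)
    also have "\<dots> = cis (real j * ?h + real j * ?h)" by (simp add: field_simps)
    finally have ej: "(cis (2 * pi / real N)) ^ j = cis (real j * ?h) * cis (real j * ?h)"
      by (simp add: cis_mult)
    have e: "cos t * cos t = 1 - sin t * sin t" for t :: real
      using sin_cos_squared_add[of t] by (simp add: power2_eq_square)
    show ?thesis unfolding ej
      by (simp add: complex_eq_iff inner_complex_def cis.sel algebra_simps e) (simp add: field_simps)
  qed
  have q1: "cis (2 * pi / real N) \<noteq> 1"
  proof
    assume "cis (2 * pi / real N) = 1"
    then have "cos (2 * pi / real N) = 1" by (simp add: complex_eq_iff cis.sel)
    moreover have "cos (2 * pi / real N) < 1"
    proof -
      have "0 < 2 * pi / real N" "2 * pi / real N \<le> pi" using assms by (auto simp: field_simps)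
      then show ?thesis using cos_monotone_0_pi[of 0 "2*pi/real N"] by simp
    qed
    ultimately show False by simp
  qed
  have "(cis (2 * pi / real N)) ^ (2*N) = 1"
    by (simp add: Complex.DeMoivre) (use assms in \<open>simp add: cis.sel complex_eq_iff field_simps\<close>)
  then have gs: "(\<Sum>j<2*N. (cis (2 * pi / real N)) ^ j) = 0"
    using q1 by (simp add: geometric_sum)
  have "(\<Sum>j<2*N. (w \<bullet> cis (real j * ?h)) *\<^sub>R cis (real j * ?h)) = (\<Sum>j<2*N. w / 2 + cnj w / 2 * (cis (2 * pi / real N)) ^ j)"
    by (rule sum.cong[OF refl], rule tm)
  also have "\<dots> = of_nat (2*N) * (w/2) + cnj w / 2 * (\<Sum>j<2*N. (cis (2 * pi / real N)) ^ j)"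
    by (simp add: sum.distrib sum_distrib_left)
  also have "\<dots> = of_nat N * w" using gs by simp
  finally show ?thesis .
qed



lemma Lip_le:
  assumes "Metric_space A rho"
    and "\<And>x y. x \<in> A \<Longrightarrow> y \<in> A \<Longrightarrow> x \<noteq> y \<Longrightarrow> norm (g x - g y) \<le> K * rho x y"
  shows "Lip rho A g \<le> ennreal K"
  unfolding Lip_def
proof (rule SUP_least)
  fix p assume "p \<in> {(x, y). x \<in> A \<and> y \<in> A \<and> x \<noteq> y}"
  then obtain x y where p: "p = (x, y)" "x \<in> A" "y \<in> A" "x \<noteq> y" by auto
  have rp: "rho x y > 0"
    using Metric_space.zero[OF assms(1) p(2,3)] Metric_space.nonneg[OF assms(1), of x y] p(4) by linarith
  have "norm (g x - g y) / rho x y \<le> K"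
    using assms(2)[OF p(2,3,4)] rp by (simp add: divide_le_eq)
  then show "ennreal (norm (g (fst p) - g (snd p)) / rho (fst p) (snd p)) \<le> ennreal K"
    using p by (simp add: ennreal_leI)
qed

lemma Lip_pair:
  assumes "Metric_space A rho" "Lip rho A g \<le> ennreal K" "K \<ge> 0" "x \<in> A" "y \<in> A"
  shows "norm (g x - g y) \<le> K * rho x y"
proof (cases "x = y")
  case True then show ?thesis using Metric_space.nonneg[OF assms(1)] assms(3) by simp
next
  case False
  have rp: "rho x y > 0"
    using Metric_space.zero[OF assms(1) assms(4,5)] Metric_space.nonneg[OF assms(1), of x y] False by linarith
  have "ennreal (norm (g x - g y) / rho x y) \<le> Lip rho A g"
  proof -
    have "(x, y) \<in> {(x, y). x \<in> A \<and> y \<in> A \<and> x \<noteq> y}" using assms False by auto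
    from SUP_upper[OF this, of "\<lambda>p. ennreal (norm (g (fst p) - g (snd p)) / rho (fst p) (snd p))"]
    show ?thesis unfolding Lip_def by simp
  qed
  also have "\<dots> \<le> ennreal K" by fact
  finally have "norm (g x - g y) / rho x y \<le> K" using assms(3) by (simp add: ennreal_le_iff)
  then show ?thesis using rp by (simp add: divide_le_eq)
qed

definition cUp :: "nat \<Rightarrow> real" where
  "cUp N = (2 / sin (pi / real N / 2) + pi) / real N"

lemma cUp_pos:
  assumes "N = 2 * m" "m > 0"
  shows "cUp N > 0"
proof -
  have "sin (pi / real N / 2) > 0"
    by (rule sin_gt_zero) (use assms in \<open>auto simp: field_simps\<close>)
  then show ?thesis unfolding cUp_def using assms by (intro divide_pos_pos add_pos_pos) auto
qed

lemma upper_LE_const: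
  assumes "N = 2 * m" "m > 0"
  shows "LE_const TYPE('z) TYPE(complex) (cUp N)"
  unfolding LE_const_def
proof (intro allI impI)
  fix Z :: "'z set" and rho X and f :: "'z \<Rightarrow> complex"
  assume ZX: "Metric_space Z rho \<and> X \<subseteq> Z"
  then have MS: "Metric_space Z rho" and XZ: "X \<subseteq> Z" by auto
  let ?c = "cUp N"
  have cpos: "?c > 0" using cUp_pos[OF assms] .
  show "\<exists>g. (\<forall>x\<in>X. g x = f x) \<and> Lip rho Z g \<le> ennreal ?c * Lip rho X f"
  proof (cases "Lip rho X f = top")
    case True
    then show ?thesis using cpos by (intro exI[of _ f]) (simp add: ennreal_mult_top)
  next
    case False
    then obtain lam where lam: "Lip rho X f = ennreal lam" "lam \<ge> 0"
      by (cases "Lip rho X f") auto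
    show ?thesis
    proof (cases "X = {}")
      case True
      have "Lip rho Z (\<lambda>_. 0::complex) \<le> ennreal 0"
        by (rule Lip_le[OF MS]) simp
      then show ?thesis using True by (intro exI[of _ "\<lambda>_. 0"]) simp
    next
      case False
      then obtain x0 where x0: "x0 \<in> X" by auto
      have MSX: "Metric_space X rho" using MS XZ by (rule Metric_space.subspace)
      have fl: "norm (f x - f y) \<le> lam * rho x y" if "x \<in> X" "y \<in> X" for x y
        by (rule Lip_pair[OF MSX]) (use lam that in auto)
      have tri: "rho a c \<le> rho a b + rho b c" if "a \<in> Z" "b \<in> Z" "c \<in> Z" for a b c
        using Metric_space.triangle[OF MS that] .
      have com: "rho a b = rho b a" for a b using Metric_space.commute[OF MS] .
      have nn: "rho a b \<ge> 0" for a b using Metric_space.nonneg[OF MS] .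
      have z0: "rho a a = 0" if "a \<in> Z" for a using Metric_space.zero[OF MS that that] by simp
      define e where "e j = cis (real j * (pi / real N))" for j :: nat
      have ne: "norm (e j) = 1" for j by (simp add: e_def)
      define G where "G j z = Inf ((\<lambda>x. f x \<bullet> e j + lam * rho z x) ` X)" for j z
      have ip: "\<bar>a \<bullet> e j - b \<bullet> e j\<bar> \<le> norm (a - b)" for a b j
      proof -
        have "\<bar>(a - b) \<bullet> e j\<bar> \<le> norm (a - b) * norm (e j)" by (rule Cauchy_Schwarz_ineq2)
        then show ?thesis using ne by (simp add: inner_diff_left)
      qed
      have bdd: "bdd_below ((\<lambda>x. f x \<bullet> e j + lam * rho z x) ` X)" if "z \<in> Z" for j z
      proof (rule bdd_belowI2)
        fix x assume x: "x \<in> X"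
        have "f x0 \<bullet> e j - f x \<bullet> e j \<le> lam * rho x0 x"
          using ip[of "f x0" j "f x"] fl[OF x0 x] by linarith
        moreover have "rho x0 x \<le> rho x0 z + rho z x" using tri x0 x that XZ by blast
        ultimately show "f x0 \<bullet> e j - lam * rho x0 z \<le> f x \<bullet> e j + lam * rho z x"
          using lam(2) by (smt (verit) mult_left_mono distrib_left)
      qed
      have Gx: "G j x = f x \<bullet> e j" if "x \<in> X" for j x
      proof -
        have "G j x \<le> f x \<bullet> e j + lam * rho x x"
          unfolding G_def by (rule cInf_lower) (use that bdd XZ in auto)
        moreover have "f x \<bullet> e j \<le> G j x"
          unfolding G_def
        proof (rule cINF_greatest)
          show "X \<noteq> {}" using x0 by auto
          fix y assume y: "y \<in> X"
          have "f x \<bullet> e j - f y \<bullet> e j \<le> lam * rho x y"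
            using ip[of "f x" j "f y"] fl[OF that y] by linarith
          then show "f x \<bullet> e j \<le> f y \<bullet> e j + lam * rho x y" by linarith
        qed
        ultimately show ?thesis using z0[of x] that XZ by auto
      qed
      have Glip: "G j z \<le> G j z' + lam * rho z z'" if "z \<in> Z" "z' \<in> Z" for j z z'
      proof -
        have "G j z - lam * rho z z' \<le> G j z'"
          unfolding G_def[of j z']
        proof (rule cINF_greatest)
          show "X \<noteq> {}" using x0 by auto
          fix x assume x: "x \<in> X"
          have "G j z \<le> f x \<bullet> e j + lam * rho z x"
            unfolding G_def by (rule cInf_lower) (use that bdd x in auto)
          moreover have "rho z x \<le> rho z z' + rho z' x" using tri that x XZ by blast
          ultimately show "G j z - lam * rho z z' \<le> f x \<bullet> e j + lam * rho z' x"
            using lam(2) by (smt (verit) mult_left_mono distrib_left)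
        qed
        then show ?thesis by linarith
      qed
      have Gabs: "\<bar>G j z - G j z'\<bar> \<le> lam * rho z z'" if "z \<in> Z" "z' \<in> Z" for j z z'
      proof -
        have "G j z' \<le> G j z + lam * rho z z'" using Glip[OF that(2,1), of j] com[of z z'] by simp
        then show ?thesis using Glip[OF that, of j] by (simp only: abs_le_iff) linarith
      qed
      define g where "g z = (1 / real N) *\<^sub>R (\<Sum>j<2*N. G j z *\<^sub>R e j)" for z
      have N2: "N \<ge> 2" using assms by simp
      have gext: "g x = f x" if "x \<in> X" for x
      proof -
        have "(\<Sum>j<2*N. G j x *\<^sub>R e j) = (\<Sum>j<2*N. (f x \<bullet> e j) *\<^sub>R e j)"
          using Gx[OF that] by simp
        also have "\<dots> = of_nat N * f x" unfolding e_def by (rule frame_identity[OF N2])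
        finally show ?thesis unfolding g_def using N2 by (simp add: scaleR_conv_of_real)
      qed
      have glip: "norm (g z - g z') \<le> (?c * lam) * rho z z'" if "z \<in> Z" "z' \<in> Z" for z z'
      proof -
        define D where "D = (\<Sum>j<2*N. (G j z - G j z') *\<^sub>R e j)"
        have gd: "g z - g z' = (1 / real N) *\<^sub>R D"
          unfolding g_def D_def by (simp add: scaleR_diff_right[symmetric] sum_subtractf scaleR_diff_left)
        define \<alpha> where "\<alpha> = Arg D"
        have Dr: "D = of_real (norm D) * cis \<alpha>" unfolding \<alpha>_def
          using rcis_cmod_Arg[of D] by (simp add: rcis_def)
        have "norm D = D \<bullet> cis \<alpha>"
        proof -
          have "D \<bullet> cis \<alpha> = norm D * (cis \<alpha> \<bullet> cis \<alpha>)"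
            by (subst Dr) (simp add: scaleR_conv_of_real[symmetric])
          also have "cis \<alpha> \<bullet> cis \<alpha> = 1" by (simp add: inner_complex_def cis.sel)
          finally show ?thesis by simp
        qed
        also have "\<dots> = (\<Sum>j<2*N. (G j z - G j z') * (e j \<bullet> cis \<alpha>))"
          unfolding D_def by (simp add: inner_sum_left)
        also have "\<dots> \<le> (\<Sum>j<2*N. lam * rho z z' * \<bar>cos (real j * (pi / real N) - \<alpha>)\<bar>)"
        proof (rule sum_mono)
          fix j
          have ec: "e j \<bullet> cis \<alpha> = cos (real j * (pi / real N) - \<alpha>)"
            by (simp add: e_def inner_complex_def cis.sel cos_diff)
          have "(G j z - G j z') * (e j \<bullet> cis \<alpha>) \<le> \<bar>G j z - G j z'\<bar> * \<bar>cos (real j * (pi / real N) - \<alpha>)\<bar>"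
            unfolding ec by (metis abs_ge_self abs_mult)
          also have "\<dots> \<le> lam * rho z z' * \<bar>cos (real j * (pi / real N) - \<alpha>)\<bar>"
            by (rule mult_right_mono[OF Gabs[OF that]]) simp
          finally show "(G j z - G j z') * (e j \<bullet> cis \<alpha>) \<le> lam * rho z z' * \<bar>cos (real j * (pi / real N) - \<alpha>)\<bar>" .
        qed
        also have "\<dots> = lam * rho z z' * (\<Sum>j<2*N. \<bar>cos (real j * (pi / real N) - \<alpha>)\<bar>)"
          by (simp add: sum_distrib_left)
        also have "\<dots> \<le> lam * rho z z' * (2 / sin (pi / real N / 2) + pi)"
          by (rule mult_left_mono[OF Tf_C3[OF assms]]) (use lam nn in simp)
        finally have nD: "norm D \<le> lam * rho z z' * (2 / sin (pi / real N / 2) + pi)" .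
        have "norm (g z - g z') = norm D / real N" unfolding gd using N2 by simp
        also have "\<dots> \<le> lam * rho z z' * (2 / sin (pi / real N / 2) + pi) / real N"
          using nD N2 by (simp add: divide_right_mono)
        also have "\<dots> = (?c * lam) * rho z z'" unfolding cUp_def by simp
        finally show ?thesis .
      qed
      have "Lip rho Z g \<le> ennreal (?c * lam)"
        by (rule Lip_le[OF MS]) (rule glip)
      also have "\<dots> = ennreal ?c * Lip rho X f"
        using lam cpos by (simp add: ennreal_mult)
      finally show ?thesis using gext by blast
    qed
  qed
qed



definition vadd :: "(nat \<Rightarrow> real) \<Rightarrow> (nat \<Rightarrow> real) \<Rightarrow> nat \<Rightarrow> real" (infixl "\<oplus>" 65) where
  "vadd y z = (\<lambda>k. y k + z k)"
definition iadd :: "(nat \<Rightarrow> int) \<Rightarrow> (nat \<Rightarrow> int) \<Rightarrow> nat \<Rightarrow> int" (infixl "\<oplus>\<^sub>i" 65) where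
  "iadd y z = (\<lambda>k. y k + z k)"


definition uu :: "nat \<Rightarrow> nat \<Rightarrow> complex" where "uu N k = cis (real k * (pi / real N))"
definition vv :: "nat \<Rightarrow> nat \<Rightarrow> complex" where "vv N i = cis ((real i + 1/2) * (pi / real N))"
definition bv :: "nat \<Rightarrow> nat \<Rightarrow> nat \<Rightarrow> real" where
  "bv N i = (\<lambda>k. if k < N then sgn (cos ((real i - real k + 1/2) * (pi / real N))) else 0)"
definition Jv :: "nat \<Rightarrow> complex \<Rightarrow> nat \<Rightarrow> real" where
  "Jv N w = (\<lambda>k. if k < N then w \<bullet> uu N k else 0)"
definition Pv :: "nat \<Rightarrow> (nat \<Rightarrow> int) \<Rightarrow> nat \<Rightarrow> real" where
  "Pv N n = (\<lambda>k. \<Sum>i<N. real_of_int (n i) * bv N i k)"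
definition dY :: "nat \<Rightarrow> (nat \<Rightarrow> real) \<Rightarrow> (nat \<Rightarrow> real) \<Rightarrow> real" where
  "dY N y y' = Max ((\<lambda>k. \<bar>y k - y' k\<bar>) ` {..<N})"
definition lat :: "real \<Rightarrow> int \<Rightarrow> int \<Rightarrow> complex" where
  "lat W a b = of_real W * Complex (of_int a) (of_int b)"
definition pt :: "nat \<Rightarrow> real \<Rightarrow> (nat \<Rightarrow> int) \<Rightarrow> int \<Rightarrow> int \<Rightarrow> nat \<Rightarrow> real" where
  "pt N W n a b = Pv N n \<oplus> Jv N (lat W a b)"
definition ZZ :: "nat \<Rightarrow> real \<Rightarrow> (nat \<Rightarrow> real) set" where
  "ZZ N W = {y. \<exists>n a b. y = pt N W n a b}"
definition XX :: "nat \<Rightarrow> real \<Rightarrow> (nat \<Rightarrow> real) set" where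
  "XX N W = {y. \<exists>a b. y = Jv N (lat W a b)}"
definition fX :: "nat \<Rightarrow> (nat \<Rightarrow> real) \<Rightarrow> complex" where
  "fX N y = Complex (y 0) (y (N div 2))"

lemma dY_ge: "k < N \<Longrightarrow> \<bar>y k - y' k\<bar> \<le> dY N y y'"
  unfolding dY_def by (rule Max_ge) auto

lemma dY_le: "N > 0 \<Longrightarrow> (\<And>k. k < N \<Longrightarrow> \<bar>y k - y' k\<bar> \<le> B) \<Longrightarrow> dY N y y' \<le> B"
  unfolding dY_def by (subst Max_le_iff) auto

lemma dY_nonneg: "N > 0 \<Longrightarrow> 0 \<le> dY N y y'"
  using dY_ge[of 0 N y y'] by simp

lemma dY_shift: "dY N (y \<oplus> z) (y' \<oplus> z) = dY N y y'"
  unfolding dY_def vadd_def by simp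

lemma lat_add: "lat W a b + lat W c d = lat W (a + c) (b + d)"
  unfolding lat_def by (simp add: complex_eq_iff algebra_simps)

lemma Jv_add: "Jv N (w + w') = Jv N w \<oplus> Jv N w'"
  unfolding Jv_def vadd_def by (auto simp: inner_add_left)

lemma Pv_add: "Pv N (n \<oplus>\<^sub>i n') = Pv N n \<oplus> Pv N n'"
  unfolding Pv_def vadd_def iadd_def by (auto simp: sum.distrib algebra_simps)

lemma Pv_zero: "Pv N (\<lambda>_. 0) = (\<lambda>_. 0)"
  unfolding Pv_def by auto

lemma vadd_zero: "(\<lambda>_. 0) \<oplus> y = y"
  unfolding vadd_def by simp

lemma vadd_assoc: "(x \<oplus> y) \<oplus> z = x \<oplus> (y \<oplus> z)"
  unfolding vadd_def by (simp add: add.assoc)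

lemma iadd_assoc: "(x \<oplus>\<^sub>i y) \<oplus>\<^sub>i z = x \<oplus>\<^sub>i (y \<oplus>\<^sub>i z)"
  unfolding iadd_def by (simp add: add.assoc)

lemma pt_outside: "k \<ge> N \<Longrightarrow> pt N W n a b k = 0"
  unfolding pt_def Pv_def Jv_def bv_def vadd_def by simp

lemma pt_in: "pt N W n a b \<in> ZZ N W"
  unfolding ZZ_def by blast

lemma pt_restrict: "pt N W n a b = pt N W (restrict n {..<N}) a b"
  unfolding pt_def Pv_def vadd_def by simp

lemma ZZ_countable: "countable (ZZ N W)"
proof -
  let ?F = "\<lambda>p. pt N W (fst p) (fst (snd p)) (snd (snd p))"
  let ?S = "PiE {..<N} (\<lambda>_. (UNIV :: int set)) \<times> (UNIV :: int set) \<times> (UNIV :: int set)"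
  have sub: "ZZ N W \<subseteq> ?F ` ?S"
  proof
    fix y assume "y \<in> ZZ N W"
    then obtain n a b where y: "y = pt N W n a b" unfolding ZZ_def by blast
    have "y = ?F (restrict n {..<N}, a, b)" using y pt_restrict by simp
    moreover have "(restrict n {..<N}, a, b) \<in> ?S" by simp
    ultimately show "y \<in> ?F ` ?S" by (rule image_eqI)
  qed
  have "countable ?S"
    by (intro countable_SIGMA countable_PiE) auto
  then show ?thesis by (rule countable_subset[OF sub countable_image])
qed

lemma ZZ_metric:
  assumes "N > 0"
  shows "Metric_space (ZZ N W) (dY N)"
proof
  fix x y show "0 \<le> dY N x y" using dY_nonneg[OF assms] .
next
  fix x y show "dY N x y = dY N y x" unfolding dY_def by (simp add: abs_minus_commute)
next
  fix x y assume x: "x \<in> ZZ N W" and y: "y \<in> ZZ N W"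
  show "dY N x y = 0 \<longleftrightarrow> x = y"
  proof
    assume d: "dY N x y = 0"
    show "x = y"
    proof
      fix k show "x k = y k"
      proof (cases "k < N")
        case True then show ?thesis using dY_ge[OF True, of x y] d by simp
      next
        case False then show ?thesis using x y pt_outside unfolding ZZ_def by auto
      qed
    qed
  next
    assume "x = y" then show "dY N x y = 0" using assms unfolding dY_def by (auto simp: image_constant_conv)
  qed
next
  fix x y z
  show "dY N x z \<le> dY N x y + dY N y z"
  proof (rule dY_le[OF assms])
    fix k assume k: "k < N"
    have "\<bar>x k - z k\<bar> \<le> \<bar>x k - y k\<bar> + \<bar>y k - z k\<bar>" by simp
    then show "\<bar>x k - z k\<bar> \<le> dY N x y + dY N y z" using dY_ge[OF k, of x y] dY_ge[OF k, of y z] by linarith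
  qed
qed

lemma XX_sub: "XX N W \<subseteq> ZZ N W"
proof
  fix y assume "y \<in> XX N W"
  then obtain a b where "y = Jv N (lat W a b)" unfolding XX_def by blast
  then have "y = pt N W (\<lambda>_. 0) a b" unfolding pt_def by (simp add: Pv_zero vadd_zero)
  then show "y \<in> ZZ N W" by (simp add: pt_in)
qed

lemma fX_Jv:
  assumes "N = 2 * m" "m > 0"
  shows "fX N (Jv N w) = w"
proof -
  have "real m * (pi / real N) = pi / 2" using assms by simp
  then show ?thesis using assms
    unfolding fX_def Jv_def uu_def by (simp add: complex_eq_iff inner_complex_def cis.sel)
qed



definition dl :: "nat \<Rightarrow> nat \<Rightarrow> int" where "dl i = (\<lambda>j. if j = i then 1 else 0)"

lemma bv_abs: "\<bar>bv N i k\<bar> \<le> 1"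
  unfolding bv_def by (auto simp: sgn_real_def)

lemma Pv_dl: "i < N \<Longrightarrow> Pv N (dl i) = bv N i"
proof -
  assume i: "i < N"
  have "(\<Sum>j<N. real_of_int (if j = i then 1 else 0) * bv N j k) = bv N i k" for k
  proof -
    have "(\<Sum>j<N. real_of_int (if j = i then 1 else 0) * bv N j k) = (\<Sum>j<N. if j = i then bv N j k else 0)"
      by (rule sum.cong) auto
    also have "\<dots> = bv N i k" using i by (simp add: sum.delta)
    finally show ?thesis .
  qed
  then show ?thesis unfolding Pv_def dl_def by auto
qed

lemma Pv_abs: "\<bar>Pv N n k\<bar> \<le> (\<Sum>i<N. \<bar>real_of_int (n i)\<bar>)"
proof -
  have "\<bar>Pv N n k\<bar> \<le> (\<Sum>i<N. \<bar>real_of_int (n i) * bv N i k\<bar>)"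
    unfolding Pv_def by (rule sum_abs)
  also have "\<dots> \<le> (\<Sum>i<N. \<bar>real_of_int (n i)\<bar>)"
    by (rule sum_mono) (use bv_abs[of N i k for i] in \<open>auto simp: abs_mult intro: mult_left_le\<close>)
  finally show ?thesis .
qed

lemma dY_vadd_left: "dY N (x \<oplus> z) x = dY N z (\<lambda>_. 0)"
  unfolding dY_def vadd_def by simp

lemma dY_step:
  assumes "N > 0" "i < N"
  shows "dY N (Pv N (n \<oplus>\<^sub>i dl i)) (Pv N n) \<le> 1"
proof -
  have "dY N (Pv N (n \<oplus>\<^sub>i dl i)) (Pv N n) = dY N (bv N i) (\<lambda>_. 0)"
    unfolding Pv_add Pv_dl[OF assms(2)] dY_vadd_left ..
  also have "\<dots> \<le> 1" by (rule dY_le[OF assms(1)]) (simp add: bv_abs)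
  finally show ?thesis .
qed

lemma Jv_decomp:
  assumes "N = 2 * m" "m > 0" "k < N"
  shows "Jv N w k = (\<Sum>i<N. (sin (pi / real N / 2) * (w \<bullet> vv N i)) * bv N i k)"
proof -
  let ?S = "sin (pi / real N / 2)"
  have S0: "?S > 0" by (rule sin_gt_zero) (use assms in \<open>auto simp: field_simps\<close>)
  have e: "(\<Sum>i<N. sgn (cos ((real i - real k + 1/2) * (pi / real N))) *\<^sub>R vv N i) = uu N k * complex_of_real (1 / ?S)"
    using Tf_C1[OF assms(1,2), of k] unfolding vv_def uu_def by (simp add: scaleR_conv_of_real)
  have "w \<bullet> (\<Sum>i<N. sgn (cos ((real i - real k + 1/2) * (pi / real N))) *\<^sub>R vv N i) = (w \<bullet> uu N k) / ?S"
    unfolding e by (simp add: inner_complex_def add_divide_distrib)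
  then have "w \<bullet> uu N k = ?S * (\<Sum>i<N. sgn (cos ((real i - real k + 1/2) * (pi / real N))) * (w \<bullet> vv N i))"
    using S0 by (simp add: inner_sum_right field_simps)
  also have "\<dots> = (\<Sum>i<N. (?S * (w \<bullet> vv N i)) * bv N i k)"
    unfolding sum_distrib_left bv_def using assms(3) by (simp add: algebra_simps)
  finally show ?thesis unfolding Jv_def using assms(3) by simp
qed

definition cf :: "nat \<Rightarrow> complex \<Rightarrow> nat \<Rightarrow> real" where
  "cf N w i = sin (pi / real N / 2) * (w \<bullet> vv N i)"
definition rf :: "nat \<Rightarrow> complex \<Rightarrow> nat \<Rightarrow> int" where
  "rf N w = (\<lambda>i. if i < N then \<lfloor>cf N w i\<rfloor> else 0)"

lemma dY_round:
  assumes "N = 2 * m" "m > 0"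
  shows "dY N (Pv N n \<oplus> Jv N w) (Pv N (n \<oplus>\<^sub>i rf N w)) \<le> real N"
proof (rule dY_le)
  show "N > 0" using assms by simp
  fix k assume k: "k < N"
  have "(Pv N n \<oplus> Jv N w) k - Pv N (n \<oplus>\<^sub>i rf N w) k = Jv N w k - Pv N (rf N w) k"
    unfolding Pv_add by (simp add: vadd_def)
  also have "\<dots> = (\<Sum>i<N. (cf N w i - real_of_int (rf N w i)) * bv N i k)"
    unfolding Jv_decomp[OF assms k] Pv_def cf_def by (simp add: sum_subtractf algebra_simps)
  finally have "\<bar>(Pv N n \<oplus> Jv N w) k - Pv N (n \<oplus>\<^sub>i rf N w) k\<bar> \<le> (\<Sum>i<N. \<bar>(cf N w i - real_of_int (rf N w i)) * bv N i k\<bar>)"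
    using sum_abs by metis
  also have "\<dots> \<le> (\<Sum>i<N. 1)"
  proof (rule sum_mono)
    fix i assume "i \<in> {..<N}"
    then have "\<bar>cf N w i - real_of_int (rf N w i)\<bar> \<le> 1" unfolding rf_def by simp linarith
    then show "\<bar>(cf N w i - real_of_int (rf N w i)) * bv N i k\<bar> \<le> 1"
      using bv_abs[of N i k] by (simp add: abs_mult mult_le_one)
  qed
  finally show "\<bar>(Pv N n \<oplus> Jv N w) k - Pv N (n \<oplus>\<^sub>i rf N w) k\<bar> \<le> real N" by simp
qed

lemma angle_lemma:
  assumes "N = 2 * m" "m > 0"
  shows "\<exists>k<N. cos (pi / real N / 2) * norm d \<le> \<bar>d \<bullet> uu N k\<bar>"
proof -
  define h where "h = pi / real N"
  have hpos: "h > 0" using assms by (simp add: h_def)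
  define \<alpha> where "\<alpha> = Arg d + 2 * pi"
  have a0: "\<alpha> \<ge> 0" using Arg_bounded[of d] unfolding \<alpha>_def by simp
  have dr: "d = complex_of_real (norm d) * cis \<alpha>"
  proof -
    have "cis \<alpha> = cis (Arg d)" unfolding \<alpha>_def by (simp add: cis_mult[symmetric])
    then show ?thesis using rcis_cmod_Arg[of d] by (simp add: rcis_def)
  qed
  define q where "q = nat \<lfloor>\<alpha> / h + 1/2\<rfloor>"
  have qnn: "\<alpha> / h + 1/2 \<ge> 0" using a0 hpos by simp
  then have qr: "real q = of_int \<lfloor>\<alpha> / h + 1/2\<rfloor>" unfolding q_def by simp
  have q1: "real q \<le> \<alpha> / h + 1/2" "\<alpha> / h + 1/2 < real q + 1" unfolding qr by linarith+
  have "(real q - 1/2) * h \<le> \<alpha>" using q1(1) hpos by (simp add: field_simps)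
  moreover have "\<alpha> < (real q + 1/2) * h" using q1(2) hpos by (simp add: field_simps)
  ultimately have x1: "\<bar>\<alpha> - real q * h\<bar> \<le> h/2" by (simp only: abs_le_iff) (simp add: algebra_simps)
  define k where "k = q mod N"
  define j where "j = q div N"
  have kN: "k < N" unfolding k_def using assms by simp
  have qjk: "real q = real j * real N + real k" unfolding j_def k_def
    by (metis div_mult_mod_eq of_nat_add of_nat_mult)
  have Nh: "real N * h = pi" using assms by (simp add: h_def)
  have e: "\<alpha> - real k * h = (\<alpha> - real q * h) + real j * pi"
    using qjk Nh by (simp add: algebra_simps)
  have ca: "\<bar>cos (\<alpha> - real k * h)\<bar> = \<bar>cos (\<alpha> - real q * h)\<bar>"
    unfolding e cos_add by (simp add: abs_mult)
  have cc: "cos (h/2) \<le> cos \<bar>\<alpha> - real q * h\<bar>"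
  proof (rule cos_monotone_0_pi_le)
    show "0 \<le> \<bar>\<alpha> - real q * h\<bar>" by simp
    show "\<bar>\<alpha> - real q * h\<bar> \<le> h/2" by (rule x1)
    have "h \<le> pi" using assms by (simp add: h_def field_simps)
    then show "h/2 \<le> pi" using pi_gt_zero by linarith
  qed
  have cx: "cos \<bar>\<alpha> - real q * h\<bar> = cos (\<alpha> - real q * h)"
    by (simp add: abs_if) (metis cos_minus minus_diff_eq)
  have "cos (h/2) \<le> \<bar>cos (\<alpha> - real k * h)\<bar>" using ca cc cx by simp
  note c1 = this
  have "d \<bullet> uu N k = norm d * cos (\<alpha> - real k * h)"
    by (subst dr) (simp add: uu_def h_def inner_complex_def cis.sel cos_diff algebra_simps)
  then have "\<bar>d \<bullet> uu N k\<bar> = norm d * \<bar>cos (\<alpha> - real k * h)\<bar>" by (simp add: abs_mult)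
  then have "cos (h/2) * norm d \<le> \<bar>d \<bullet> uu N k\<bar>"
    using c1 by (simp add: mult.commute mult_left_mono)
  then show ?thesis using kN unfolding h_def by blast
qed

lemma cos_half_pos:
  assumes "N = 2 * m" "m > 0"
  shows "cos (pi / real N / 2) > 0"
proof (rule cos_gt_zero_pi)
  have "0 < pi / real N / 2" using assms by simp
  moreover have "- (pi / 2) < 0" by simp
  ultimately show "- (pi / 2) < pi / real N / 2" by linarith
  have "pi / real N \<le> pi / 2" by (rule divide_left_mono) (use assms in auto)
  then have "pi / real N < pi" using pi_gt_zero by linarith
  then show "pi / real N / 2 < pi / 2" by (rule divide_strict_right_mono) simp
qed

lemma Lip_XX:
  assumes "N = 2 * m" "m > 0"
  shows "Lip (dY N) (XX N W) (fX N) \<le> ennreal (1 / cos (pi / real N / 2))"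
proof (rule Lip_le)
  show "Metric_space (XX N W) (dY N)"
    using Metric_space.subspace[OF ZZ_metric XX_sub] assms by simp
  fix x y assume x: "x \<in> XX N W" and y: "y \<in> XX N W" and "x \<noteq> y"
  obtain a b where xa: "x = Jv N (lat W a b)" using x unfolding XX_def by blast
  obtain c d where yc: "y = Jv N (lat W c d)" using y unfolding XX_def by blast
  let ?e = "lat W a b - lat W c d"
  let ?C = "cos (pi / real N / 2)"
  have C0: "?C > 0" by (rule cos_half_pos[OF assms])
  obtain k where k: "k < N" "?C * norm ?e \<le> \<bar>?e \<bullet> uu N k\<bar>"
    using angle_lemma[OF assms] by blast
  have "\<bar>?e \<bullet> uu N k\<bar> = \<bar>x k - y k\<bar>" unfolding xa yc Jv_def using k(1) by (simp add: inner_diff_left)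
  also have "\<dots> \<le> dY N x y" by (rule dY_ge[OF k(1)])
  finally have "?C * norm ?e \<le> dY N x y" using k(2) by linarith
  moreover have "norm (fX N x - fX N y) = norm ?e" unfolding xa yc fX_Jv[OF assms] ..
  ultimately show "norm (fX N x - fX N y) \<le> 1 / ?C * dY N x y"
    using C0 by (simp add: field_simps)
qed



definition Dbox :: "nat \<Rightarrow> nat \<Rightarrow> (nat \<Rightarrow> int) set" where
  "Dbox N K = PiE {..<N} (\<lambda>_. {- int K..int K})"
definition sdl :: "nat \<Rightarrow> int \<Rightarrow> nat \<Rightarrow> int" where
  "sdl i s = (\<lambda>j. if j = i then s else 0)"
definition n1 :: "nat \<Rightarrow> (nat \<Rightarrow> int) \<Rightarrow> nat" where
  "n1 N ofs = (\<Sum>j<N. nat \<bar>ofs j\<bar>)"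

lemma sum_int_telescope:
  fixes \<psi> :: "int \<Rightarrow> 'a::ab_group_add"
  assumes "a \<le> b + 1"
  shows "(\<Sum>y\<in>{a..b}. \<psi> (y + 1) - \<psi> y) = \<psi> (b + 1) - \<psi> a"
proof -
  have "\<forall>b. a \<le> b + 1 \<longrightarrow> b + 1 - a = int k \<longrightarrow> (\<Sum>y\<in>{a..b}. \<psi> (y + 1) - \<psi> y) = \<psi> (b + 1) - \<psi> a" for k
  proof (induction k)
    case 0 then show ?case by auto
  next
    case (Suc k)
    show ?case
    proof (intro allI impI)
      fix b assume b: "a \<le> b + 1" "b + 1 - a = int (Suc k)"
      have b': "a \<le> (b - 1) + 1" "(b - 1) + 1 - a = int k" using b by auto
      have "{a..b} = insert b {a..b-1}" using b by auto
      then have "(\<Sum>y\<in>{a..b}. \<psi> (y + 1) - \<psi> y) = (\<psi> (b + 1) - \<psi> b) + (\<Sum>y\<in>{a..b-1}. \<psi> (y + 1) - \<psi> y)"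
        by simp
      also have "(\<Sum>y\<in>{a..b-1}. \<psi> (y + 1) - \<psi> y) = \<psi> b - \<psi> a"
        using Suc.IH b' by simp
      finally show "(\<Sum>y\<in>{a..b}. \<psi> (y + 1) - \<psi> y) = \<psi> (b + 1) - \<psi> a" by simp
    qed
  qed
  from this[of "nat (b + 1 - a)"] show ?thesis using assms by simp
qed

lemma sum_int_telescope_neg:
  fixes \<psi> :: "int \<Rightarrow> 'a::ab_group_add"
  assumes "a \<le> b + 1"
  shows "(\<Sum>y\<in>{a..b}. \<psi> (y - 1) - \<psi> y) = \<psi> (a - 1) - \<psi> b"
proof -
  have "(\<Sum>y\<in>{a..b}. \<psi> (y - 1) - \<psi> y) = - (\<Sum>y\<in>{a..b}. (\<lambda>t. \<psi> (t - 1)) (y + 1) - (\<lambda>t. \<psi> (t - 1)) y)"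
    by (simp add: sum_negf[symmetric])
  also have "\<dots> = \<psi> (a - 1) - \<psi> b" by (subst sum_int_telescope[OF assms]) simp
  finally show ?thesis .
qed

lemma box_split:
  assumes "i < N"
  shows "(\<Sum>n\<in>Dbox N K. H n) = (\<Sum>g\<in>PiE ({..<N} - {i}) (\<lambda>_. {- int K..int K}). \<Sum>y\<in>{- int K..int K}. H (g(i := y)))"
    and "card (Dbox N K) = (2 * K + 1) * card (PiE ({..<N} - {i}) (\<lambda>_. {- int K..int K}))"
proof -
  let ?I = "{..<N} - {i}"
  let ?T = "\<lambda>_::nat. {- int K..int K}"
  have e: "{..<N} = insert i ?I" using assms by auto
  have D: "Dbox N K = (\<lambda>(y, g). g(i := y)) ` (?T i \<times> PiE ?I ?T)"
    unfolding Dbox_def by (subst e) (rule PiE_insert_eq)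
  have inj: "inj_on (\<lambda>(y, g). g(i := y)) (?T i \<times> PiE ?I ?T)"
    by (rule inj_combinator) simp
  have "(\<Sum>n\<in>Dbox N K. H n) = (\<Sum>p\<in>?T i \<times> PiE ?I ?T. H ((\<lambda>(y, g). g(i := y)) p))"
    unfolding D by (rule sum.reindex[OF inj, unfolded comp_def])
  also have "\<dots> = (\<Sum>y\<in>?T i. \<Sum>g\<in>PiE ?I ?T. H (g(i := y)))"
    by (simp add: sum.cartesian_product case_prod_beta)
  also have "\<dots> = (\<Sum>g\<in>PiE ?I ?T. \<Sum>y\<in>?T i. H (g(i := y)))"
    by (rule sum.swap)
  finally show "(\<Sum>n\<in>Dbox N K. H n) = (\<Sum>g\<in>PiE ?I ?T. \<Sum>y\<in>{- int K..int K}. H (g(i := y)))" .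
  have "card (Dbox N K) = card (?T i \<times> PiE ?I ?T)" unfolding D by (rule card_image[OF inj])
  also have "\<dots> = card (?T i) * card (PiE ?I ?T)" by (rule card_cartesian_product)
  also have "card (?T i) = 2 * K + 1" by (simp add: nat_add_distrib nat_mult_distrib)
  finally show "card (Dbox N K) = (2 * K + 1) * card (PiE ?I ?T)" .
qed

lemma finite_Dbox: "finite (Dbox N K)"
  unfolding Dbox_def by (rule finite_PiE) auto

lemma box_shift:
  fixes F :: "(nat \<Rightarrow> int) \<Rightarrow> 'a::real_normed_vector"
  assumes "i < N" "s = 1 \<or> s = -1" "\<And>n. norm (F n) \<le> C"
  shows "norm ((\<Sum>n\<in>Dbox N K. F (n \<oplus>\<^sub>i sdl i s)) - (\<Sum>n\<in>Dbox N K. F n)) \<le> 2 * C * real (card (Dbox N K)) / real (2 * K + 1)"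
proof -
  let ?I = "{..<N} - {i}"
  let ?T = "\<lambda>_::nat. {- int K..int K}"
  let ?P = "PiE ?I ?T"
  have upd: "g(i := y) \<oplus>\<^sub>i sdl i s = g(i := y + s)" for g :: "nat \<Rightarrow> int" and y
    unfolding iadd_def sdl_def by auto
  have inner: "norm ((\<Sum>y\<in>{- int K..int K}. F (g(i := y + s))) - (\<Sum>y\<in>{- int K..int K}. F (g(i := y)))) \<le> 2 * C" for g
  proof -
    let ?\<psi> = "\<lambda>y. F (g(i := y))"
    have eq: "(\<Sum>y\<in>{- int K..int K}. F (g(i := y + s))) - (\<Sum>y\<in>{- int K..int K}. F (g(i := y))) = (\<Sum>y\<in>{- int K..int K}. ?\<psi> (y + s) - ?\<psi> y)"
      by (simp add: sum_subtractf)
    have nb: "norm (?\<psi> a - ?\<psi> b) \<le> 2 * C" for a b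
      using norm_triangle_ineq4[of "?\<psi> a" "?\<psi> b"] assms(3)[of "g(i := a)"] assms(3)[of "g(i := b)"] by linarith
    from assms(2) show ?thesis
    proof
      assume "s = 1"
      then have "(\<Sum>y\<in>{- int K..int K}. ?\<psi> (y + s) - ?\<psi> y) = ?\<psi> (int K + 1) - ?\<psi> (- int K)"
        using sum_int_telescope[of "- int K" "int K" ?\<psi>] by simp
      then show ?thesis unfolding eq using nb by simp
    next
      assume "s = -1"
      then have "(\<Sum>y\<in>{- int K..int K}. ?\<psi> (y + s) - ?\<psi> y) = ?\<psi> (- int K - 1) - ?\<psi> (int K)"
        using sum_int_telescope_neg[of "- int K" "int K" ?\<psi>] by simp
      then show ?thesis unfolding eq using nb by simp
    qed
  qed
  have "(\<Sum>n\<in>Dbox N K. F (n \<oplus>\<^sub>i sdl i s)) - (\<Sum>n\<in>Dbox N K. F n)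
      = (\<Sum>g\<in>?P. (\<Sum>y\<in>{- int K..int K}. F (g(i := y + s))) - (\<Sum>y\<in>{- int K..int K}. F (g(i := y))))"
    unfolding box_split(1)[OF assms(1), of "\<lambda>n. F (n \<oplus>\<^sub>i sdl i s)"] box_split(1)[OF assms(1), of F]
    by (simp add: upd sum_subtractf)
  also have "norm \<dots> \<le> (\<Sum>g\<in>?P. 2 * C)"
    by (rule order_trans[OF norm_sum sum_mono]) (rule inner)
  also have "\<dots> = 2 * C * real (card ?P)" by simp
  also have "real (card ?P) = real (card (Dbox N K)) / real (2 * K + 1)"
    unfolding box_split(2)[OF assms(1)] by (simp add: field_simps)
  finally show ?thesis by simp
qed

lemma box_offset:
  fixes F :: "(nat \<Rightarrow> int) \<Rightarrow> 'a::real_normed_vector"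
  assumes "\<And>n. norm (F n) \<le> C" "\<And>j. j \<ge> N \<Longrightarrow> ofs j = 0"
  shows "norm ((\<Sum>n\<in>Dbox N K. F (n \<oplus>\<^sub>i ofs)) - (\<Sum>n\<in>Dbox N K. F n)) \<le> 2 * C * real (card (Dbox N K)) / real (2 * K + 1) * real (n1 N ofs)"
  using assms(2)
proof (induction "n1 N ofs" arbitrary: ofs)
  case 0
  then have "ofs = (\<lambda>_. 0)"
  proof -
    have "ofs j = 0" for j
    proof (cases "j < N")
      case True then show ?thesis using 0(1) unfolding n1_def by simp
    next
      case False then show ?thesis using 0(2) by simp
    qed
    then show ?thesis by auto
  qed
  then show ?case unfolding iadd_def n1_def by simp
next
  case (Suc k)
  obtain i where i: "i < N" "ofs i \<noteq> 0"
  proof -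
    have "n1 N ofs \<noteq> 0" using Suc(2) by simp
    then obtain j where "j < N" "nat \<bar>ofs j\<bar> \<noteq> 0" unfolding n1_def by (auto simp: sum_eq_0_iff)
    then show ?thesis using that by auto
  qed
  define s where "s = sgn (ofs i)"
  define ofs' where "ofs' = ofs(i := ofs i - s)"
  have s1: "s = 1 \<or> s = -1" using i(2) unfolding s_def by (auto simp: sgn_if)
  have ofs'N: "ofs' j = 0" if "j \<ge> N" for j using Suc(3)[OF that] i(1) that unfolding ofs'_def by auto
  have absi: "nat \<bar>ofs' i\<bar> + 1 = nat \<bar>ofs i\<bar>" using i(2) unfolding ofs'_def s_def by (auto simp: sgn_if)
  have "n1 N ofs = nat \<bar>ofs i\<bar> + (\<Sum>j\<in>{..<N} - {i}. nat \<bar>ofs j\<bar>)"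
    unfolding n1_def using i(1) by (simp add: sum.remove)
  moreover have "n1 N ofs' = nat \<bar>ofs' i\<bar> + (\<Sum>j\<in>{..<N} - {i}. nat \<bar>ofs j\<bar>)"
    unfolding n1_def using i(1) by (simp add: sum.remove ofs'_def)
  ultimately have n1ofs: "n1 N ofs' = k" using Suc(2) absi by simp
  have IH: "norm ((\<Sum>n\<in>Dbox N K. F (n \<oplus>\<^sub>i ofs')) - (\<Sum>n\<in>Dbox N K. F n)) \<le> 2 * C * real (card (Dbox N K)) / real (2 * K + 1) * real k"
    using Suc(1)[of ofs'] n1ofs ofs'N by simp
  have ee: "n \<oplus>\<^sub>i ofs = (n \<oplus>\<^sub>i sdl i s) \<oplus>\<^sub>i ofs'" for n
    unfolding iadd_def sdl_def ofs'_def by auto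
  have sh: "norm ((\<Sum>n\<in>Dbox N K. (\<lambda>x. F (x \<oplus>\<^sub>i ofs')) (n \<oplus>\<^sub>i sdl i s)) - (\<Sum>n\<in>Dbox N K. (\<lambda>x. F (x \<oplus>\<^sub>i ofs')) n))
      \<le> 2 * C * real (card (Dbox N K)) / real (2 * K + 1)"
    by (rule box_shift[OF i(1) s1]) (rule assms(1))
  have "norm ((\<Sum>n\<in>Dbox N K. F (n \<oplus>\<^sub>i ofs)) - (\<Sum>n\<in>Dbox N K. F n))
      \<le> norm ((\<Sum>n\<in>Dbox N K. F ((n \<oplus>\<^sub>i sdl i s) \<oplus>\<^sub>i ofs')) - (\<Sum>n\<in>Dbox N K. F (n \<oplus>\<^sub>i ofs')))
       + norm ((\<Sum>n\<in>Dbox N K. F (n \<oplus>\<^sub>i ofs')) - (\<Sum>n\<in>Dbox N K. F n))"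
    unfolding ee using norm_triangle_ineq[of "(\<Sum>n\<in>Dbox N K. F ((n \<oplus>\<^sub>i sdl i s) \<oplus>\<^sub>i ofs')) - (\<Sum>n\<in>Dbox N K. F (n \<oplus>\<^sub>i ofs'))" "(\<Sum>n\<in>Dbox N K. F (n \<oplus>\<^sub>i ofs')) - (\<Sum>n\<in>Dbox N K. F n)"] by simp
  also have "\<dots> \<le> 2 * C * real (card (Dbox N K)) / real (2 * K + 1) + 2 * C * real (card (Dbox N K)) / real (2 * K + 1) * real k"
    using sh IH by simp
  also have "\<dots> = 2 * C * real (card (Dbox N K)) / real (2 * K + 1) * real (Suc k)" by (simp only: of_nat_Suc distrib_left mult_1_right)
  finally show ?case using Suc(2) by simp
qed



lemma Jv_zero: "Jv N 0 = (\<lambda>_. 0)"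
  unfolding Jv_def by auto

lemma vadd_zero_right: "y \<oplus> (\<lambda>_. 0) = y"
  unfolding vadd_def by simp

lemma lat_zero: "lat W 0 0 = 0"
  unfolding lat_def by (simp add: complex_eq_iff)

lemma dY_vadd_right: "dY N (x \<oplus> z) z = dY N x (\<lambda>_. 0)"
  unfolding dY_def vadd_def by simp

lemma dY_comm: "dY N x y = dY N y x"
  unfolding dY_def by (simp add: abs_minus_commute)

lemma ZZ_addJ: "y \<in> ZZ N W \<Longrightarrow> y \<oplus> Jv N (lat W a b) \<in> ZZ N W"
proof -
  assume "y \<in> ZZ N W"
  then obtain n c d where y: "y = pt N W n c d" unfolding ZZ_def by blast
  have "y \<oplus> Jv N (lat W a b) = pt N W n (c + a) (d + b)"
    unfolding y pt_def vadd_assoc Jv_add[symmetric] lat_add ..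
  then show ?thesis by (simp add: pt_in)
qed

lemma Pv_in: "Pv N n \<in> ZZ N W"
proof -
  have "Pv N n = pt N W n 0 0" unfolding pt_def lat_zero Jv_zero vadd_zero_right ..
  then show ?thesis by (simp add: pt_in)
qed

lemma norm_sum_const_bound:
  fixes f :: "'b \<Rightarrow> 'a::real_normed_vector"
  assumes "\<And>x. x \<in> A \<Longrightarrow> norm (f x) \<le> c"
  shows "norm (\<Sum>x\<in>A. f x) \<le> real (card A) * c"
proof -
  have "norm (\<Sum>x\<in>A. f x) \<le> (\<Sum>x\<in>A. c)"
    by (rule order_trans[OF norm_sum sum_mono]) (rule assms)
  then show ?thesis by simp
qed

lemma inv_cancel_helper2: "(n::nat) > 0 \<Longrightarrow> 1 / real (n^2) * (real n * x) = x / real n"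
  by (simp add: power2_eq_square)

lemma cancel_helper3: "(c::real) \<noteq> 0 \<Longrightarrow> (a * c / d * x) / c = a / d * x"
  by simp

lemma inv_cancel_helper: "(r::real) \<noteq> 0 \<Longrightarrow> 1 / r * (r * x) = x"
  by simp

lemma card_int_box: "card {- int M..int M} = 2 * M + 1"
  by (simp add: nat_add_distrib nat_mult_distrib)

locale LBc =
  fixes N m :: nat and W L :: real and K M :: nat and g :: "(nat \<Rightarrow> real) \<Rightarrow> complex"
  assumes Nm: "N = 2 * m" and m0: "m > 0" and W0: "W > 0" and L0: "L \<ge> 0"
    and glip: "\<And>y y'. y \<in> ZZ N W \<Longrightarrow> y' \<in> ZZ N W \<Longrightarrow> norm (g y - g y') \<le> L * dY N y y'"
    and gX: "\<And>a b. g (Jv N (lat W a b)) = lat W a b"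
begin

lemma N0: "N > 0" using Nm m0 by simp

definition Gav :: "(nat \<Rightarrow> real) \<Rightarrow> complex" where
  "Gav y = (1 / real ((2 * M + 1)^2)) *\<^sub>R (\<Sum>a\<in>{- int M..int M}. \<Sum>b\<in>{- int M..int M}. g (y \<oplus> Jv N (lat W a b)) - lat W a b)"

lemma Gav_lip:
  assumes "y \<in> ZZ N W" "y' \<in> ZZ N W"
  shows "norm (Gav y - Gav y') \<le> L * dY N y y'"
proof -
  let ?c = "1 / real ((2 * M + 1)^2)"
  let ?I = "{- int M..int M}"
  have "Gav y - Gav y' = ?c *\<^sub>R (\<Sum>a\<in>?I. \<Sum>b\<in>?I. g (y \<oplus> Jv N (lat W a b)) - g (y' \<oplus> Jv N (lat W a b)))"
    unfolding Gav_def by (simp add: scaleR_diff_right[symmetric] sum_subtractf[symmetric])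
  also have "norm \<dots> \<le> ?c * (\<Sum>a\<in>?I. \<Sum>b\<in>?I. L * dY N y y')"
  proof -
    have "norm (\<Sum>a\<in>?I. \<Sum>b\<in>?I. g (y \<oplus> Jv N (lat W a b)) - g (y' \<oplus> Jv N (lat W a b))) \<le> (\<Sum>a\<in>?I. \<Sum>b\<in>?I. L * dY N y y')"
    proof (rule order_trans[OF norm_sum sum_mono], rule order_trans[OF norm_sum sum_mono])
      fix a b
      have "norm (g (y \<oplus> Jv N (lat W a b)) - g (y' \<oplus> Jv N (lat W a b))) \<le> L * dY N (y \<oplus> Jv N (lat W a b)) (y' \<oplus> Jv N (lat W a b))"
        by (rule glip) (use assms ZZ_addJ in auto)
      then show "norm (g (y \<oplus> Jv N (lat W a b)) - g (y' \<oplus> Jv N (lat W a b))) \<le> L * dY N y y'"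
        by (simp add: dY_shift)
    qed
    then show ?thesis by (simp add: divide_right_mono)
  qed
  also have "(\<Sum>a\<in>?I. \<Sum>b\<in>?I. L * dY N y y') = real ((2 * M + 1)^2) * (L * dY N y y')"
    by (simp add: card_int_box power2_eq_square algebra_simps)
  also have "?c * (real ((2 * M + 1)^2) * (L * dY N y y')) = L * dY N y y'" by (rule inv_cancel_helper) simp
  finally show ?thesis .
qed

lemma Gav_equiv:
  assumes y: "y \<in> ZZ N W" and B: "\<And>a b. norm (g (y \<oplus> Jv N (lat W a b)) - lat W a b) \<le> B"
    and d: "(da, db) \<in> {(1, 0), (-1, 0), (0, 1), (0, -1)}"
  shows "norm (Gav (y \<oplus> Jv N (lat W da db)) - Gav y - lat W da db) \<le> 2 * B / real (2 * M + 1)"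
proof -
  let ?c = "1 / real ((2 * M + 1)^2)"
  let ?I = "{- int M..int M}"
  define \<phi> where "\<phi> a b = g (y \<oplus> Jv N (lat W a b)) - lat W a b" for a b
  have e1: "g ((y \<oplus> Jv N (lat W da db)) \<oplus> Jv N (lat W a b)) - lat W a b = \<phi> (a + da) (b + db) + lat W da db" for a b
  proof -
    have "(y \<oplus> Jv N (lat W da db)) \<oplus> Jv N (lat W a b) = y \<oplus> Jv N (lat W (a + da) (b + db))"
      unfolding vadd_assoc Jv_add[symmetric] lat_add by (simp add: add.commute)
    moreover have "lat W (a + da) (b + db) = lat W a b + lat W da db" by (simp add: lat_add)
    ultimately show ?thesis unfolding \<phi>_def by simp
  qed
  have cI: "real (card ?I) = real (2 * M + 1)" by (simp only: card_int_box)
  have "Gav (y \<oplus> Jv N (lat W da db)) = ?c *\<^sub>R (\<Sum>a\<in>?I. \<Sum>b\<in>?I. \<phi> (a + da) (b + db)) + ?c *\<^sub>R (\<Sum>a\<in>?I. \<Sum>b\<in>?I. lat W da db)"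
    unfolding Gav_def e1 by (simp add: sum.distrib scaleR_add_right)
  also have "?c *\<^sub>R (\<Sum>a\<in>?I. \<Sum>b\<in>?I. lat W da db) = lat W da db"
  proof -
    have "(\<Sum>a\<in>?I. \<Sum>b\<in>?I. lat W da db) = real (card ?I) *\<^sub>R (real (card ?I) *\<^sub>R lat W da db)"
      by (simp only: sum_constant_scaleR)
    also have "\<dots> = real ((2 * M + 1)^2) *\<^sub>R lat W da db"
      unfolding cI scaleR_scaleR by (simp only: of_nat_power power2_eq_square of_nat_mult)
    finally show ?thesis by simp
  qed
  finally have G1: "Gav (y \<oplus> Jv N (lat W da db)) - Gav y - lat W da db = ?c *\<^sub>R (\<Sum>a\<in>?I. \<Sum>b\<in>?I. \<phi> (a + da) (b + db) - \<phi> a b)"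
    unfolding Gav_def \<phi>_def[symmetric] by (simp add: sum_subtractf scaleR_diff_right)
  have nb: "norm (\<phi> a b - \<phi> a' b') \<le> 2 * B" for a b a' b'
    using norm_triangle_ineq4[of "\<phi> a b" "\<phi> a' b'"] B[of a b] B[of a' b'] unfolding \<phi>_def by linarith
  have M1: "- int M \<le> int M + 1" by simp
  have S: "norm (\<Sum>a\<in>?I. \<Sum>b\<in>?I. \<phi> (a + da) (b + db) - \<phi> a b) \<le> real (2 * M + 1) * (2 * B)"
  proof -
    consider "da = 1" "db = 0" | "da = -1" "db = 0" | "da = 0" "db = 1" | "da = 0" "db = -1" using d by auto
    then show ?thesis
    proof cases
      case 1
      have "(\<Sum>a\<in>?I. \<Sum>b\<in>?I. \<phi> (a + da) (b + db) - \<phi> a b) = (\<Sum>a\<in>?I. \<Sum>b\<in>?I. \<phi> (a + 1) b - \<phi> a b)"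
        using 1 by simp
      also have "\<dots> = (\<Sum>b\<in>?I. \<Sum>a\<in>?I. \<phi> (a + 1) b - \<phi> a b)" by (rule sum.swap)
      also have "\<dots> = (\<Sum>b\<in>?I. \<phi> (int M + 1) b - \<phi> (- int M) b)"
        by (rule sum.cong[OF refl]) (rule sum_int_telescope[OF M1, of "\<lambda>a. \<phi> a _"])
      finally have e: "(\<Sum>a\<in>?I. \<Sum>b\<in>?I. \<phi> (a + da) (b + db) - \<phi> a b) = (\<Sum>b\<in>?I. \<phi> (int M + 1) b - \<phi> (- int M) b)" .
      show ?thesis unfolding e cI[symmetric]
        by (rule norm_sum_const_bound) (rule nb)
    next
      case 2
      have "(\<Sum>a\<in>?I. \<Sum>b\<in>?I. \<phi> (a + da) (b + db) - \<phi> a b) = (\<Sum>a\<in>?I. \<Sum>b\<in>?I. \<phi> (a - 1) b - \<phi> a b)"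
        using 2 by simp
      also have "\<dots> = (\<Sum>b\<in>?I. \<Sum>a\<in>?I. \<phi> (a - 1) b - \<phi> a b)" by (rule sum.swap)
      also have "\<dots> = (\<Sum>b\<in>?I. \<phi> (- int M - 1) b - \<phi> (int M) b)"
        by (rule sum.cong[OF refl]) (rule sum_int_telescope_neg[OF M1, of "\<lambda>a. \<phi> a _"])
      finally have e: "(\<Sum>a\<in>?I. \<Sum>b\<in>?I. \<phi> (a + da) (b + db) - \<phi> a b) = (\<Sum>b\<in>?I. \<phi> (- int M - 1) b - \<phi> (int M) b)" .
      show ?thesis unfolding e cI[symmetric]
        by (rule norm_sum_const_bound) (rule nb)
    next
      case 3
      have "(\<Sum>a\<in>?I. \<Sum>b\<in>?I. \<phi> (a + da) (b + db) - \<phi> a b) = (\<Sum>a\<in>?I. \<Sum>b\<in>?I. \<phi> a (b + 1) - \<phi> a b)"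
        using 3 by simp
      also have "\<dots> = (\<Sum>a\<in>?I. \<phi> a (int M + 1) - \<phi> a (- int M))"
        by (rule sum.cong[OF refl]) (rule sum_int_telescope[OF M1])
      finally have e: "(\<Sum>a\<in>?I. \<Sum>b\<in>?I. \<phi> (a + da) (b + db) - \<phi> a b) = (\<Sum>a\<in>?I. \<phi> a (int M + 1) - \<phi> a (- int M))" .
      show ?thesis unfolding e cI[symmetric]
        by (rule norm_sum_const_bound) (rule nb)
    next
      case 4
      have "(\<Sum>a\<in>?I. \<Sum>b\<in>?I. \<phi> (a + da) (b + db) - \<phi> a b) = (\<Sum>a\<in>?I. \<Sum>b\<in>?I. \<phi> a (b - 1) - \<phi> a b)"
        using 4 by simp
      also have "\<dots> = (\<Sum>a\<in>?I. \<phi> a (- int M - 1) - \<phi> a (int M))"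
        by (rule sum.cong[OF refl]) (rule sum_int_telescope_neg[OF M1])
      finally have e: "(\<Sum>a\<in>?I. \<Sum>b\<in>?I. \<phi> (a + da) (b + db) - \<phi> a b) = (\<Sum>a\<in>?I. \<phi> a (- int M - 1) - \<phi> a (int M))" .
      show ?thesis unfolding e cI[symmetric]
        by (rule norm_sum_const_bound) (rule nb)
    qed
  qed
  have "norm (Gav (y \<oplus> Jv N (lat W da db)) - Gav y - lat W da db) \<le> ?c * (real (2 * M + 1) * (2 * B))"
    unfolding G1 using S by (simp add: divide_right_mono)
  also have "\<dots> = 2 * B / real (2 * M + 1)" by (rule inv_cancel_helper2) simp
  finally show ?thesis .
qed


definition Fi :: "nat \<Rightarrow> (nat \<Rightarrow> int) \<Rightarrow> complex" where
  "Fi i x = Gav (Pv N (x \<oplus>\<^sub>i dl i)) - Gav (Pv N x)"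

lemma Fi_bound: "i < N \<Longrightarrow> norm (Fi i x) \<le> L"
proof -
  assume i: "i < N"
  have "norm (Fi i x) \<le> L * dY N (Pv N (x \<oplus>\<^sub>i dl i)) (Pv N x)"
    unfolding Fi_def by (rule Gav_lip) (rule Pv_in)+
  also have "\<dots> \<le> L * 1" by (rule mult_left_mono[OF dY_step[OF N0 i] L0])
  finally show ?thesis by simp
qed

definition cD :: real where "cD = real (card (Dbox N K))"

lemma cD_pos: "cD > 0"
proof -
  have "card (Dbox N K) = (\<Prod>i<N. card {- int K..int K})"
    unfolding Dbox_def by (rule card_PiE) simp
  then show ?thesis unfolding cD_def by (simp add: card_int_box)
qed

definition A :: "nat \<Rightarrow> complex" where "A i = (1 / cD) *\<^sub>R (\<Sum>n\<in>Dbox N K. Fi i n)"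

lemma A_bound: "i < N \<Longrightarrow> norm (A i) \<le> L"
proof -
  assume i: "i < N"
  have "norm (\<Sum>n\<in>Dbox N K. Fi i n) \<le> real (card (Dbox N K)) * L"
    by (rule norm_sum_const_bound) (rule Fi_bound[OF i])
  then show ?thesis unfolding A_def using cD_pos by (simp add: cD_def field_simps)
qed

definition TT :: "(nat \<Rightarrow> int) \<Rightarrow> complex" where
  "TT r = (\<Sum>n\<in>Dbox N K. Gav (Pv N (n \<oplus>\<^sub>i r)) - Gav (Pv N n))"

lemma path_lemma:
  assumes "\<And>j. j \<ge> N \<Longrightarrow> r j = 0"
  shows "norm ((1 / cD) *\<^sub>R TT r - (\<Sum>i<N. of_int (r i) *\<^sub>R A i)) \<le> 2 * L / real (2 * K + 1) * (real (n1 N r))^2"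
  using assms
proof (induction "n1 N r" arbitrary: r)
  case 0
  then have "r = (\<lambda>_. 0)"
  proof -
    have "r j = 0" for j
    proof (cases "j < N")
      case True then show ?thesis using 0(1) unfolding n1_def by simp
    next
      case False then show ?thesis using 0(2) by simp
    qed
    then show ?thesis by auto
  qed
  then show ?case unfolding TT_def iadd_def n1_def by simp
next
  case (Suc k)
  obtain i where i: "i < N" "r i \<noteq> 0"
  proof -
    have "n1 N r \<noteq> 0" using Suc(2) by simp
    then obtain j where "j < N" "nat \<bar>r j\<bar> \<noteq> 0" unfolding n1_def by (auto simp: sum_eq_0_iff)
    then show ?thesis using that by auto
  qed
  define s where "s = sgn (r i)"
  define r' where "r' = r(i := r i - s)"
  have s1: "s = 1 \<or> s = -1" using i(2) unfolding s_def by (auto simp: sgn_if)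
  have r'N: "r' j = 0" if "j \<ge> N" for j using Suc(3)[OF that] i(1) that unfolding r'_def by auto
  have absi: "nat \<bar>r' i\<bar> + 1 = nat \<bar>r i\<bar>" using i(2) unfolding r'_def s_def by (auto simp: sgn_if)
  have "n1 N r = nat \<bar>r i\<bar> + (\<Sum>j\<in>{..<N} - {i}. nat \<bar>r j\<bar>)"
    unfolding n1_def using i(1) by (simp add: sum.remove)
  moreover have "n1 N r' = nat \<bar>r' i\<bar> + (\<Sum>j\<in>{..<N} - {i}. nat \<bar>r j\<bar>)"
    unfolding n1_def using i(1) by (simp add: sum.remove r'_def)
  ultimately have n1r': "n1 N r' = k" using Suc(2) absi by simp
  have IH: "norm ((1 / cD) *\<^sub>R TT r' - (\<Sum>i<N. of_int (r' i) *\<^sub>R A i)) \<le> 2 * L / real (2 * K + 1) * (real k)^2"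
    using Suc(1)[of r'] n1r' r'N by simp
  define H where "H n = Gav (Pv N (n \<oplus>\<^sub>i r)) - Gav (Pv N (n \<oplus>\<^sub>i r'))" for n
  have TTsplit: "TT r = (\<Sum>n\<in>Dbox N K. H n) + TT r'"
    unfolding TT_def H_def by (simp add: sum.distrib[symmetric])
  have Hb: "norm ((\<Sum>n\<in>Dbox N K. H n) - of_int s *\<^sub>R (\<Sum>n\<in>Dbox N K. Fi i n)) \<le> 2 * L * cD / real (2 * K + 1) * real (Suc k)"
    using s1
  proof
    assume s: "s = 1"
    have e: "n \<oplus>\<^sub>i r = (n \<oplus>\<^sub>i r') \<oplus>\<^sub>i dl i" for n
      unfolding iadd_def dl_def r'_def s by auto
    have "H n = Fi i (n \<oplus>\<^sub>i r')" for n unfolding H_def Fi_def e ..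
    then have "norm ((\<Sum>n\<in>Dbox N K. H n) - of_int s *\<^sub>R (\<Sum>n\<in>Dbox N K. Fi i n)) = norm ((\<Sum>n\<in>Dbox N K. Fi i (n \<oplus>\<^sub>i r')) - (\<Sum>n\<in>Dbox N K. Fi i n))"
      using s by simp
    also have "\<dots> \<le> 2 * L * cD / real (2 * K + 1) * real (n1 N r')"
      unfolding cD_def by (rule box_offset) (use Fi_bound[OF i(1)] r'N in auto)
    also have "\<dots> \<le> 2 * L * cD / real (2 * K + 1) * real (Suc k)"
      using n1r' L0 cD_pos by (intro mult_left_mono) auto
    finally show ?thesis .
  next
    assume s: "s = -1"
    have e: "(n \<oplus>\<^sub>i r) \<oplus>\<^sub>i dl i = n \<oplus>\<^sub>i r'" for n
      unfolding iadd_def dl_def r'_def s by auto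
    have "H n = - Fi i (n \<oplus>\<^sub>i r)" for n unfolding H_def Fi_def e by simp
    then have "norm ((\<Sum>n\<in>Dbox N K. H n) - of_int s *\<^sub>R (\<Sum>n\<in>Dbox N K. Fi i n)) = norm ((\<Sum>n\<in>Dbox N K. Fi i (n \<oplus>\<^sub>i r)) - (\<Sum>n\<in>Dbox N K. Fi i n))"
      using s by (simp add: sum_negf norm_minus_commute)
    also have "\<dots> \<le> 2 * L * cD / real (2 * K + 1) * real (n1 N r)"
      unfolding cD_def by (rule box_offset) (use Fi_bound[OF i(1)] Suc(3) in auto)
    also have "\<dots> = 2 * L * cD / real (2 * K + 1) * real (Suc k)" using Suc(2) by simp
    finally show ?thesis .
  qed
  have rsum: "(\<Sum>j<N. of_int (r j) *\<^sub>R A j) = (\<Sum>j<N. of_int (r' j) *\<^sub>R A j) + of_int s *\<^sub>R A i"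
  proof -
    have "(\<Sum>j<N. of_int (r j) *\<^sub>R A j) = (\<Sum>j<N. of_int (r' j) *\<^sub>R A j + (if j = i then of_int s *\<^sub>R A i else 0))"
      by (rule sum.cong[OF refl]) (auto simp: r'_def scaleR_add_left[symmetric])
    also have "\<dots> = (\<Sum>j<N. of_int (r' j) *\<^sub>R A j) + of_int s *\<^sub>R A i"
      using i(1) by (simp add: sum.distrib sum.delta)
    finally show ?thesis .
  qed
  have "(1 / cD) *\<^sub>R TT r - (\<Sum>j<N. of_int (r j) *\<^sub>R A j)
      = (1 / cD) *\<^sub>R ((\<Sum>n\<in>Dbox N K. H n) - of_int s *\<^sub>R (\<Sum>n\<in>Dbox N K. Fi i n))
        + ((1 / cD) *\<^sub>R TT r' - (\<Sum>j<N. of_int (r' j) *\<^sub>R A j))"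
  proof -
    have Ai: "of_int s *\<^sub>R A i = (1 / cD) *\<^sub>R (of_int s *\<^sub>R (\<Sum>n\<in>Dbox N K. Fi i n))"
      unfolding A_def by (simp add: scaleR_scaleR mult.commute)
    show ?thesis unfolding TTsplit rsum Ai by (simp add: algebra_simps)
  qed
  also have "norm \<dots> \<le> 2 * L / real (2 * K + 1) * real (Suc k) + 2 * L / real (2 * K + 1) * (real k)^2"
  proof (rule order_trans[OF norm_triangle_ineq add_mono[OF _ IH]])
    let ?X = "(\<Sum>n\<in>Dbox N K. H n) - of_int s *\<^sub>R (\<Sum>n\<in>Dbox N K. Fi i n)"
    have "norm ((1 / cD) *\<^sub>R ?X) = norm ?X / cD" using cD_pos by simp
    also have "\<dots> \<le> (2 * L * cD / real (2 * K + 1) * real (Suc k)) / cD"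
      by (rule divide_right_mono[OF Hb]) (use cD_pos in simp)
    also have "\<dots> = 2 * L / real (2 * K + 1) * real (Suc k)" by (rule cancel_helper3) (use cD_pos in simp)
    finally show "norm ((1 / cD) *\<^sub>R ?X) \<le> 2 * L / real (2 * K + 1) * real (Suc k)" .
  qed
  also have "\<dots> = 2 * L / real (2 * K + 1) * (real (Suc k) + (real k)^2)"
    by (simp only: distrib_left)
  also have "\<dots> \<le> 2 * L / real (2 * K + 1) * (real (Suc k))^2"
    using L0 by (intro mult_left_mono) (auto simp: power2_eq_square algebra_simps)
  finally show ?case using Suc(2) by simp
qed


lemma Dbox_abs: "n \<in> Dbox N K \<Longrightarrow> i < N \<Longrightarrow> \<bar>n i\<bar> \<le> int K"
proof -
  assume "n \<in> Dbox N K" "i < N"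
  then have "n i \<in> {- int K..int K}" unfolding Dbox_def by (auto simp: PiE_iff)
  then show ?thesis by auto
qed

lemma dY_Pv0: "n \<in> Dbox N K \<Longrightarrow> dY N (Pv N n) (\<lambda>_. 0) \<le> real N * real K"
proof (rule dY_le[OF N0])
  fix k assume "k < N" and n: "n \<in> Dbox N K"
  have "\<bar>Pv N n k - 0\<bar> \<le> (\<Sum>i<N. \<bar>real_of_int (n i)\<bar>)" using Pv_abs by simp
  also have "\<dots> \<le> (\<Sum>i<N. real K)"
  proof (rule sum_mono)
    fix i assume "i \<in> {..<N}"
    then have "\<bar>n i\<bar> \<le> int K" using Dbox_abs[OF n] by simp
    then have "real_of_int \<bar>n i\<bar> \<le> real_of_int (int K)" by (rule of_int_le_iff[THEN iffD2])
    then show "\<bar>real_of_int (n i)\<bar> \<le> real K" by simp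
  qed
  finally show "\<bar>Pv N n k - 0\<bar> \<le> real N * real K" by simp
qed

lemma Gav_w:
  assumes n: "n \<in> Dbox N K" and d: "(da, db) \<in> {(1, 0), (-1, 0), (0, 1), (0, -1)}"
  shows "norm (Gav (Pv N n \<oplus> Jv N (lat W da db)) - Gav (Pv N n) - lat W da db) \<le> 2 * (L * (real N * real K)) / real (2 * M + 1)"
proof (rule Gav_equiv[OF Pv_in _ d])
  fix a b
  have J: "Jv N (lat W a b) \<in> ZZ N W" using XX_sub unfolding XX_def by blast
  have "norm (g (Pv N n \<oplus> Jv N (lat W a b)) - lat W a b) = norm (g (Pv N n \<oplus> Jv N (lat W a b)) - g (Jv N (lat W a b)))"
    by (simp add: gX)
  also have "\<dots> \<le> L * dY N (Pv N n \<oplus> Jv N (lat W a b)) (Jv N (lat W a b))"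
    by (rule glip) (use J ZZ_addJ Pv_in in auto)
  also have "\<dots> = L * dY N (Pv N n) (\<lambda>_. 0)" by (simp add: dY_vadd_right)
  also have "\<dots> \<le> L * (real N * real K)" by (rule mult_left_mono[OF dY_Pv0[OF n] L0])
  finally show "norm (g (Pv N n \<oplus> Jv N (lat W a b)) - lat W a b) \<le> L * (real N * real K)" .
qed

lemma rf_support: "j \<ge> N \<Longrightarrow> rf N w j = 0"
  unfolding rf_def by simp

lemma approx_w:
  assumes d: "(da, db) \<in> {(1, 0), (-1, 0), (0, 1), (0, -1)}"
  shows "norm ((\<Sum>i<N. of_int (rf N (lat W da db) i) *\<^sub>R A i) - lat W da db)
    \<le> L * real N + 2 * (L * (real N * real K)) / real (2 * M + 1) + 2 * L / real (2 * K + 1) * (real (n1 N (rf N (lat W da db))))^2"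
proof -
  let ?w = "lat W da db"
  let ?r = "rf N ?w"
  let ?E1 = "L * real N + 2 * (L * (real N * real K)) / real (2 * M + 1)"
  have term_b: "norm ((Gav (Pv N (n \<oplus>\<^sub>i ?r)) - Gav (Pv N n)) - ?w) \<le> ?E1" if n: "n \<in> Dbox N K" for n
  proof -
    have "(Gav (Pv N (n \<oplus>\<^sub>i ?r)) - Gav (Pv N n)) - ?w = (Gav (Pv N (n \<oplus>\<^sub>i ?r)) - Gav (Pv N n \<oplus> Jv N ?w)) + (Gav (Pv N n \<oplus> Jv N ?w) - Gav (Pv N n) - ?w)"
      by simp
    also have "norm \<dots> \<le> L * real N + 2 * (L * (real N * real K)) / real (2 * M + 1)"
    proof (rule order_trans[OF norm_triangle_ineq add_mono])
      have "norm (Gav (Pv N (n \<oplus>\<^sub>i ?r)) - Gav (Pv N n \<oplus> Jv N ?w)) \<le> L * dY N (Pv N (n \<oplus>\<^sub>i ?r)) (Pv N n \<oplus> Jv N ?w)"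
        by (rule Gav_lip) (use Pv_in ZZ_addJ in auto)
      also have "\<dots> \<le> L * real N"
        by (rule mult_left_mono[OF _ L0]) (use dY_round[OF Nm m0, of n ?w] dY_comm in metis)
      finally show "norm (Gav (Pv N (n \<oplus>\<^sub>i ?r)) - Gav (Pv N n \<oplus> Jv N ?w)) \<le> L * real N" .
      show "norm (Gav (Pv N n \<oplus> Jv N ?w) - Gav (Pv N n) - ?w) \<le> 2 * (L * (real N * real K)) / real (2 * M + 1)"
        by (rule Gav_w[OF n d])
    qed
    finally show ?thesis .
  qed
  have e1: "norm ((1 / cD) *\<^sub>R TT ?r - ?w) \<le> ?E1"
  proof -
    have "(1 / cD) *\<^sub>R TT ?r - ?w = (1 / cD) *\<^sub>R (\<Sum>n\<in>Dbox N K. (Gav (Pv N (n \<oplus>\<^sub>i ?r)) - Gav (Pv N n)) - ?w)"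
    proof -
      have "(\<Sum>n\<in>Dbox N K. ?w) = cD *\<^sub>R ?w" unfolding cD_def by (rule sum_constant_scaleR)
      then show ?thesis unfolding TT_def using cD_pos by (simp add: sum_subtractf scaleR_diff_right)
    qed
    also have "norm \<dots> \<le> ?E1"
    proof -
      have "norm (\<Sum>n\<in>Dbox N K. (Gav (Pv N (n \<oplus>\<^sub>i ?r)) - Gav (Pv N n)) - ?w) \<le> cD * ?E1"
        unfolding cD_def by (rule norm_sum_const_bound) (rule term_b)
      then show ?thesis using cD_pos by (simp add: pos_divide_le_eq mult.commute)
    qed
    finally show ?thesis .
  qed
  have e2: "norm ((1 / cD) *\<^sub>R TT ?r - (\<Sum>i<N. of_int (?r i) *\<^sub>R A i)) \<le> 2 * L / real (2 * K + 1) * (real (n1 N ?r))^2"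
    by (rule path_lemma) (rule rf_support)
  have "norm ((\<Sum>i<N. of_int (?r i) *\<^sub>R A i) - ?w) \<le> norm ((1 / cD) *\<^sub>R TT ?r - ?w) + norm ((1 / cD) *\<^sub>R TT ?r - (\<Sum>i<N. of_int (?r i) *\<^sub>R A i))"
    using norm_triangle_ineq[of "(1 / cD) *\<^sub>R TT ?r - ?w" "(\<Sum>i<N. of_int (?r i) *\<^sub>R A i) - (1 / cD) *\<^sub>R TT ?r"]
    by (simp add: norm_minus_commute)
  then show ?thesis using e1 e2 by linarith
qed

lemma n1_rf:
  assumes "norm w \<le> W"
  shows "real (n1 N (rf N w)) \<le> real N * (W + 1)"
proof -
  have "real (n1 N (rf N w)) = (\<Sum>j<N. real (nat \<bar>rf N w j\<bar>))" unfolding n1_def by simp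
  also have "\<dots> \<le> (\<Sum>j<N. W + 1)"
  proof (rule sum_mono)
    fix j assume j: "j \<in> {..<N}"
    have "\<bar>cf N w j\<bar> \<le> W"
    proof -
      have "\<bar>sin (pi / real N / 2)\<bar> \<le> 1" by simp
      moreover have "\<bar>w \<bullet> vv N j\<bar> \<le> W"
        using Cauchy_Schwarz_ineq2[of w "vv N j"] assms by (simp add: vv_def)
      ultimately show ?thesis unfolding cf_def abs_mult
        by (metis abs_ge_zero mult_le_one mult.left_neutral mult_mono order_trans)
    qed
    then have "\<bar>real_of_int \<lfloor>cf N w j\<rfloor>\<bar> \<le> W + 1" by linarith
    then show "real (nat \<bar>rf N w j\<bar>) \<le> W + 1" using j unfolding rf_def by simp
  qed
  finally show ?thesis by simp
qed


definition wda :: "nat \<Rightarrow> int" where "wda k = (if k = 0 then 1 else if k = 1 then -1 else 0)"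
definition wdb :: "nat \<Rightarrow> int" where "wdb k = (if k = 2 then 1 else if k = 3 then -1 else 0)"
definition wk :: "nat \<Rightarrow> complex" where "wk k = lat W (wda k) (wdb k)"

lemma wk_dir: "k < 4 \<Longrightarrow> (wda k, wdb k) \<in> {(1, 0), (-1, 0), (0, 1), (0, -1)}"
  unfolding wda_def wdb_def by (auto simp: less_Suc_eq numeral_eq_Suc)

lemma wk_norm: "k < 4 \<Longrightarrow> norm (wk k) = W"
  unfolding wk_def wda_def wdb_def lat_def using W0 by (auto simp: less_Suc_eq numeral_eq_Suc norm_mult complex_norm)

lemma wk_inner: "k < 4 \<Longrightarrow> wk k \<bullet> wk k = W^2"
  using wk_norm by (simp add: power2_norm_eq_inner[symmetric])

lemma four_point: "(\<Sum>k<4. (wk k \<bullet> v) *\<^sub>R wk k) = (2 * W^2) *\<^sub>R v"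
  by (simp add: numeral_eq_Suc wk_def wda_def wdb_def lat_def complex_eq_iff inner_complex_def power2_eq_square algebra_simps)

lemma core_ineq:
  assumes hK: "2 * (real N * (W + 1))^2 \<le> real (2 * K + 1)"
    and hM: "2 * (real N * real K) \<le> real (2 * M + 1)"
  shows "4 * W \<le> L * (2 * real N * W * sin (pi / real N / 2) + 8 * real N + 8)"
proof -
  let ?S = "sin (pi / real N / 2)"
  have S0: "?S \<ge> 0" by (rule sin_ge_zero) (use N0 in \<open>auto simp: field_simps\<close>)
  define X where "X k = (\<Sum>i<N. of_int (rf N (wk k) i) *\<^sub>R A i)" for k
  have errk: "norm (X k - wk k) \<le> L * (real N + 2)" if k: "k < 4" for k
  proof -
    have "norm (X k - wk k) \<le> L * real N + 2 * (L * (real N * real K)) / real (2 * M + 1) + 2 * L / real (2 * K + 1) * (real (n1 N (rf N (wk k))))^2"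
      unfolding X_def wk_def by (rule approx_w[OF wk_dir[OF k]])
    also have "2 * (L * (real N * real K)) / real (2 * M + 1) \<le> L"
    proof -
      have "2 * (L * (real N * real K)) / real (2 * M + 1) = L * (2 * (real N * real K) / real (2 * M + 1))" by simp
      also have "\<dots> \<le> L * 1" by (rule mult_left_mono[OF _ L0]) (use hM in simp)
      finally show ?thesis by simp
    qed
    also have "2 * L / real (2 * K + 1) * (real (n1 N (rf N (wk k))))^2 \<le> L"
    proof -
      have n1b: "real (n1 N (rf N (wk k))) \<le> real N * (W + 1)" by (rule n1_rf) (simp add: wk_norm[OF k])
      have "(real (n1 N (rf N (wk k))))^2 \<le> (real N * (W + 1))^2"
        by (rule power_mono[OF n1b]) simp
      then have "2 * (real (n1 N (rf N (wk k))))^2 \<le> real (2 * K + 1)" using hK by linarith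
      then have "2 * (real (n1 N (rf N (wk k))))^2 / real (2 * K + 1) \<le> 1" by simp
      then have "L * (2 * (real (n1 N (rf N (wk k))))^2 / real (2 * K + 1)) \<le> L * 1" by (rule mult_left_mono[OF _ L0])
      moreover have "2 * L / real (2 * K + 1) * Y = L * (2 * Y / real (2 * K + 1))" for Y :: real
        by (simp add: field_simps)
      ultimately show ?thesis by (metis mult_1_right)
    qed
    finally show ?thesis by (simp add: algebra_simps)
  qed
  have lowk: "W^2 - L * (real N + 2) * W \<le> X k \<bullet> wk k" if k: "k < 4" for k
  proof -
    have "X k \<bullet> wk k = wk k \<bullet> wk k + (X k - wk k) \<bullet> wk k" by (simp add: inner_diff_left)
    moreover have "- ((X k - wk k) \<bullet> wk k) \<le> L * (real N + 2) * W"
    proof -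
      have "\<bar>(X k - wk k) \<bullet> wk k\<bar> \<le> norm (X k - wk k) * norm (wk k)" by (rule Cauchy_Schwarz_ineq2)
      also have "\<dots> \<le> L * (real N + 2) * W" unfolding wk_norm[OF k]
        by (rule mult_right_mono[OF errk[OF k]]) (use W0 in simp)
      finally show ?thesis by linarith
    qed
    ultimately show ?thesis using wk_inner[OF k] by linarith
  qed
  have highk: "X k \<bullet> wk k \<le> (\<Sum>i<N. cf N (wk k) i * (A i \<bullet> wk k)) + real N * (L * W)" if k: "k < 4" for k
  proof -
    have "X k \<bullet> wk k = (\<Sum>i<N. of_int (rf N (wk k) i) * (A i \<bullet> wk k))"
      unfolding X_def by (simp add: inner_sum_left)
    also have "\<dots> \<le> (\<Sum>i<N. cf N (wk k) i * (A i \<bullet> wk k) + L * W)"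
    proof (rule sum_mono)
      fix i assume "i \<in> {..<N}"
      then have i: "i < N" by simp
      have r: "\<bar>of_int (rf N (wk k) i) - cf N (wk k) i\<bar> \<le> 1" unfolding rf_def using i by simp linarith
      have x: "\<bar>A i \<bullet> wk k\<bar> \<le> L * W"
      proof -
        have "\<bar>A i \<bullet> wk k\<bar> \<le> norm (A i) * norm (wk k)" by (rule Cauchy_Schwarz_ineq2)
        also have "\<dots> \<le> L * W" unfolding wk_norm[OF k] by (rule mult_right_mono[OF A_bound[OF i]]) (use W0 in simp)
        finally show ?thesis .
      qed
      have "(of_int (rf N (wk k) i) - cf N (wk k) i) * (A i \<bullet> wk k) \<le> \<bar>of_int (rf N (wk k) i) - cf N (wk k) i\<bar> * \<bar>A i \<bullet> wk k\<bar>"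
        by (metis abs_ge_self abs_mult)
      also have "\<dots> \<le> 1 * (L * W)" by (rule mult_mono[OF r x]) auto
      finally show "of_int (rf N (wk k) i) * (A i \<bullet> wk k) \<le> cf N (wk k) i * (A i \<bullet> wk k) + L * W"
        by (simp add: algebra_simps)
    qed
    also have "\<dots> = (\<Sum>i<N. cf N (wk k) i * (A i \<bullet> wk k)) + real N * (L * W)" by (simp add: sum.distrib)
    finally show ?thesis .
  qed
  have cfsum: "(\<Sum>k<4. \<Sum>i<N. cf N (wk k) i * (A i \<bullet> wk k)) \<le> real N * (?S * (2 * W^2) * L)"
  proof -
    have "(\<Sum>k<4. \<Sum>i<N. cf N (wk k) i * (A i \<bullet> wk k)) = (\<Sum>i<N. A i \<bullet> (\<Sum>k<4. cf N (wk k) i *\<^sub>R wk k))"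
      by (subst sum.swap) (simp add: inner_sum_right mult.commute)
    also have "\<dots> = (\<Sum>i<N. A i \<bullet> ((?S * (2 * W^2)) *\<^sub>R vv N i))"
    proof (rule sum.cong[OF refl])
      fix i
      have "(\<Sum>k<4. cf N (wk k) i *\<^sub>R wk k) = ?S *\<^sub>R (\<Sum>k<4. (wk k \<bullet> vv N i) *\<^sub>R wk k)"
        unfolding cf_def by (simp add: scaleR_sum_right scaleR_scaleR)
      also have "\<dots> = (?S * (2 * W^2)) *\<^sub>R vv N i" unfolding four_point by simp
      finally show "A i \<bullet> (\<Sum>k<4. cf N (wk k) i *\<^sub>R wk k) = A i \<bullet> ((?S * (2 * W^2)) *\<^sub>R vv N i)" by simp
    qed
    also have "\<dots> \<le> (\<Sum>i<N. ?S * (2 * W^2) * L)"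
    proof (rule sum_mono)
      fix i assume "i \<in> {..<N}"
      then have i: "i < N" by simp
      have "A i \<bullet> vv N i \<le> norm (A i) * norm (vv N i)" by (rule norm_cauchy_schwarz)
      also have "\<dots> \<le> L" using A_bound[OF i] by (simp add: vv_def)
      finally have "A i \<bullet> vv N i \<le> L" .
      then show "A i \<bullet> ((?S * (2 * W^2)) *\<^sub>R vv N i) \<le> ?S * (2 * W^2) * L"
        using S0 by (simp add: mult_left_mono)
    qed
    also have "\<dots> = real N * (?S * (2 * W^2) * L)" by simp
    finally show ?thesis .
  qed
  have "(\<Sum>k<(4::nat). W^2 - L * (real N + 2) * W) \<le> (\<Sum>k<4. X k \<bullet> wk k)"
    by (rule sum_mono) (use lowk in simp)
  also have "\<dots> \<le> (\<Sum>k<4. (\<Sum>i<N. cf N (wk k) i * (A i \<bullet> wk k)) + real N * (L * W))"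
    by (rule sum_mono) (use highk in simp)
  also have "\<dots> = (\<Sum>k<4. \<Sum>i<N. cf N (wk k) i * (A i \<bullet> wk k)) + 4 * (real N * (L * W))"
    by (simp add: sum.distrib)
  finally have main: "4 * (W^2 - L * (real N + 2) * W) \<le> real N * (?S * (2 * W^2) * L) + 4 * (real N * (L * W))"
    using cfsum by simp
  have "W * (4 * W) \<le> W * (L * (2 * real N * W * ?S + 8 * real N + 8))"
    using main by (simp add: power2_eq_square algebra_simps)
  then show ?thesis using W0 by simp
qed

end



lemma Lip_cong:
  assumes "\<And>x. x \<in> A \<Longrightarrow> g x = h x"
  shows "Lip d A g = Lip d A h"
  unfolding Lip_def by (rule SUP_cong) (use assms in auto)

lemma Lip_reindex:
  assumes inj: "inj_on \<iota> A" and inv: "\<And>x. x \<in> A \<Longrightarrow> \<kappa> (\<iota> x) = x"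
  shows "Lip (\<lambda>a b. d (\<kappa> a) (\<kappa> b)) (\<iota> ` A) h = Lip d A (\<lambda>x. h (\<iota> x))"
proof -
  let ?PA = "{(x, y). x \<in> A \<and> y \<in> A \<and> x \<noteq> y}"
  have P: "{(a, b). a \<in> \<iota> ` A \<and> b \<in> \<iota> ` A \<and> a \<noteq> b} = (\<lambda>(x, y). (\<iota> x, \<iota> y)) ` ?PA"
  proof
    show "{(a, b). a \<in> \<iota> ` A \<and> b \<in> \<iota> ` A \<and> a \<noteq> b} \<subseteq> (\<lambda>(x, y). (\<iota> x, \<iota> y)) ` ?PA"
      by (auto simp: image_iff)
    show "(\<lambda>(x, y). (\<iota> x, \<iota> y)) ` ?PA \<subseteq> {(a, b). a \<in> \<iota> ` A \<and> b \<in> \<iota> ` A \<and> a \<noteq> b}"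
      using inj by (auto dest: inj_onD)
  qed
  show ?thesis
    unfolding Lip_def P image_image
    by (rule SUP_cong) (use inv in auto)
qed

lemma LE_const_transfer:
  fixes f :: "'a \<Rightarrow> 'v::real_normed_vector"
  assumes LE: "LE_const TYPE(nat) TYPE('v) c" and cS: "countable S" and MS: "Metric_space S d" and XS: "X \<subseteq> S"
  shows "\<exists>g. (\<forall>x\<in>X. g x = f x) \<and> Lip d S g \<le> ennreal c * Lip d X f"
proof -
  define \<iota> where "\<iota> = to_nat_on S"
  define \<kappa> where "\<kappa> = from_nat_into S"
  have inj: "inj_on \<iota> S" unfolding \<iota>_def using cS by blast
  have inv: "\<kappa> (\<iota> x) = x" if "x \<in> S" for x unfolding \<iota>_def \<kappa>_def using cS that by simp
  define \<rho> where "\<rho> a b = d (\<kappa> a) (\<kappa> b)" for a b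
  have M': "Metric_space (\<iota> ` S) \<rho>"
  proof
    fix x y show "0 \<le> \<rho> x y" unfolding \<rho>_def using Metric_space.nonneg[OF MS] .
  next
    fix x y show "\<rho> x y = \<rho> y x" unfolding \<rho>_def using Metric_space.commute[OF MS] .
  next
    fix x y assume "x \<in> \<iota> ` S" "y \<in> \<iota> ` S"
    then obtain x0 y0 where "x0 \<in> S" "y0 \<in> S" "x = \<iota> x0" "y = \<iota> y0" by blast
    then show "\<rho> x y = 0 \<longleftrightarrow> x = y"
      unfolding \<rho>_def using inv Metric_space.zero[OF MS] inj by (auto dest: inj_onD)
  next
    fix x y z assume "x \<in> \<iota> ` S" "y \<in> \<iota> ` S" "z \<in> \<iota> ` S"
    then obtain x0 y0 z0 where "x0 \<in> S" "y0 \<in> S" "z0 \<in> S" "x = \<iota> x0" "y = \<iota> y0" "z = \<iota> z0" by blast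
    then show "\<rho> x z \<le> \<rho> x y + \<rho> y z"
      unfolding \<rho>_def using inv Metric_space.triangle[OF MS] by auto
  qed
  have X': "\<iota> ` X \<subseteq> \<iota> ` S" using XS by auto
  have ex: "\<exists>g'. (\<forall>x\<in>\<iota> ` X. g' x = f (\<kappa> x)) \<and> Lip \<rho> (\<iota> ` S) g' \<le> ennreal c * Lip \<rho> (\<iota> ` X) (\<lambda>a. f (\<kappa> a))"
    using LE[unfolded LE_const_def, rule_format, of "\<iota> ` S" \<rho> "\<iota> ` X" "\<lambda>a. f (\<kappa> a)"] M' X' by simp
  then obtain g' where g': "\<forall>x\<in>\<iota> ` X. g' x = f (\<kappa> x)" "Lip \<rho> (\<iota> ` S) g' \<le> ennreal c * Lip \<rho> (\<iota> ` X) (\<lambda>a. f (\<kappa> a))"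
    by blast
  define g where "g x = g' (\<iota> x)" for x
  have "\<forall>x\<in>X. g x = f x" unfolding g_def using g'(1) inv XS by auto
  moreover have "Lip d S g = Lip \<rho> (\<iota> ` S) g'"
    unfolding g_def \<rho>_def by (rule Lip_reindex[OF inj inv, symmetric])
  moreover have "Lip \<rho> (\<iota> ` X) (\<lambda>a. f (\<kappa> a)) = Lip d X f"
  proof -
    have "Lip \<rho> (\<iota> ` X) (\<lambda>a. f (\<kappa> a)) = Lip d X (\<lambda>x. f (\<kappa> (\<iota> x)))"
      unfolding \<rho>_def by (rule Lip_reindex) (use inj XS inv in \<open>auto intro: inj_on_subset\<close>)
    also have "\<dots> = Lip d X f" by (rule Lip_cong) (use inv XS in auto)
    finally show ?thesis .
  qed
  ultimately show ?thesis using g'(2) by auto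
qed



lemma lim_cUp: "((\<lambda>m::nat. cUp (2 * m)) \<longlongrightarrow> 4 / pi) sequentially"
proof -
  have l: "((\<lambda>x::real. (2 / sin (pi / (2*x) / 2) + pi) / (2*x)) \<longlongrightarrow> 4/pi) at_top"
    by real_asymp
  have "((\<lambda>m::nat. (\<lambda>x::real. (2 / sin (pi / (2*x) / 2) + pi) / (2*x)) (real m)) \<longlongrightarrow> 4/pi) sequentially"
    by (rule filterlim_compose[OF l filterlim_real_sequentially])
  then show ?thesis unfolding cUp_def by simp
qed

lemma lim_cos: "((\<lambda>m::nat. cos (pi / real (2 * m) / 2)) \<longlongrightarrow> 1) sequentially"
proof -
  have l: "((\<lambda>x::real. cos (pi / (2*x) / 2)) \<longlongrightarrow> 1) at_top"
    by real_asymp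
  have "((\<lambda>m::nat. (\<lambda>x::real. cos (pi / (2*x) / 2)) (real m)) \<longlongrightarrow> 1) sequentially"
    by (rule filterlim_compose[OF l filterlim_real_sequentially])
  then show ?thesis by simp
qed

lemma LE_upper: "LE TYPE('z) TYPE(complex) \<le> 4 / pi"
proof -
  let ?S = "{c. 0 \<le> c \<and> LE_const TYPE('z) TYPE(complex) c}"
  have bdd: "bdd_below ?S" by (rule bdd_belowI[of _ 0]) auto
  show ?thesis unfolding LE_def
  proof (rule field_le_epsilon)
    fix e :: real assume e: "0 < e"
    have "\<forall>\<^sub>F m in sequentially. cUp (2 * m) < 4 / pi + e"
      by (rule order_tendstoD(2)[OF lim_cUp]) (use e in simp)
    then obtain m0 where m0: "\<And>m. m \<ge> m0 \<Longrightarrow> cUp (2 * m) < 4 / pi + e"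
      unfolding eventually_sequentially by blast
    define m where "m = Suc m0"
    have mpos: "m > 0" and mm: "m \<ge> m0" unfolding m_def by auto
    have "cUp (2 * m) \<in> ?S"
      using upper_LE_const[of "2 * m" m, OF refl mpos] cUp_pos[of "2 * m" m, OF refl mpos] by auto
    then have "Inf ?S \<le> cUp (2 * m)" by (rule cInf_lower[OF _ bdd])
    then show "Inf ?S \<le> 4 / pi + e" using m0[OF mm] by linarith
  qed
qed

lemma lower_bound:
  assumes c0: "0 \<le> c" and LEc: "LE_const TYPE(nat) TYPE(complex) c"
  shows "4 / pi \<le> c"
proof (rule ccontr)
  assume "\<not> 4 / pi \<le> c"
  then have cl: "c * pi < 4" using pi_gt_zero by (simp add: field_simps)
  have "\<forall>\<^sub>F m in sequentially. c * pi / 4 < cos (pi / real (2 * m) / 2)"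
    by (rule order_tendstoD(1)[OF lim_cos]) (use cl in simp)
  then obtain m0 where m0: "\<And>m. m \<ge> m0 \<Longrightarrow> c * pi / 4 < cos (pi / real (2 * m) / 2)"
    unfolding eventually_sequentially by blast
  define m where "m = Suc m0"
  have mpos: "m > 0" and mm: "m \<ge> m0" unfolding m_def by auto
  define N where "N = 2 * m"
  have Nm: "N = 2 * m" by (simp add: N_def)
  define Co where "Co = cos (pi / real N / 2)"
  have Co0: "Co > 0" unfolding Co_def by (rule cos_half_pos[OF Nm mpos])
  define q where "q = 4 * Co - c * pi"
  have q0: "q > 0" using m0[OF mm] unfolding q_def Co_def N_def by (simp add: field_simps)
  define W where "W = c * (8 * real N + 8) / q + 1"
  have W0: "W > 0" unfolding W_def using c0 q0 by (simp add: add_nonneg_pos)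
  have Wq: "W * q = c * (8 * real N + 8) + q" unfolding W_def using q0 by (simp add: field_simps)
  define K where "K = nat \<lceil>2 * (real N * (W + 1))^2\<rceil>"
  have hK: "2 * (real N * (W + 1))^2 \<le> real (2 * K + 1)"
    unfolding K_def by linarith
  define M where "M = N * K"
  have hM: "2 * (real N * real K) \<le> real (2 * M + 1)" unfolding M_def by simp
  define L where "L = c / Co"
  have L0: "L \<ge> 0" unfolding L_def using c0 Co0 by simp
  obtain g where gext: "\<forall>x\<in>XX N W. g x = fX N x"
    and gL: "Lip (dY N) (ZZ N W) g \<le> ennreal c * Lip (dY N) (XX N W) (fX N)"
    using LE_const_transfer[OF LEc ZZ_countable ZZ_metric XX_sub, of N W "fX N"] Nm mpos by auto
  have "Lip (dY N) (ZZ N W) g \<le> ennreal c * ennreal (1 / Co)"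
    using gL mult_left_mono[OF Lip_XX[OF Nm mpos, of W], of "ennreal c"] unfolding Co_def by (auto intro: order_trans)
  also have "\<dots> = ennreal L" unfolding L_def using c0 Co0 by (simp add: ennreal_mult[symmetric] divide_inverse)
  finally have gLL: "Lip (dY N) (ZZ N W) g \<le> ennreal L" .
  have MS: "Metric_space (ZZ N W) (dY N)" using ZZ_metric Nm mpos by simp
  interpret LB: LBc N m W L K M g
  proof
    show "N = 2 * m" by (rule Nm)
    show "0 < m" by (rule mpos)
    show "0 < W" by (rule W0)
    show "0 \<le> L" by (rule L0)
    show "norm (g y - g y') \<le> L * dY N y y'" if "y \<in> ZZ N W" "y' \<in> ZZ N W" for y y'
      by (rule Lip_pair[OF MS gLL L0 that])
    show "g (Jv N (lat W a b)) = lat W a b" for a b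
    proof -
      have "Jv N (lat W a b) \<in> XX N W" unfolding XX_def by blast
      then show ?thesis using gext fX_Jv[OF Nm mpos] by simp
    qed
  qed
  have core: "4 * W \<le> L * (2 * real N * W * sin (pi / real N / 2) + 8 * real N + 8)"
    by (rule LB.core_ineq[OF hK hM])
  have "sin (pi / real N / 2) \<le> pi / real N / 2" by (rule sin_x_le_x) (use Nm mpos in simp)
  then have "2 * real N * W * sin (pi / real N / 2) \<le> 2 * real N * W * (pi / real N / 2)"
    using W0 Nm mpos by (intro mult_left_mono) auto
  also have "\<dots> = pi * W" using Nm mpos by simp
  finally have "L * (2 * real N * W * sin (pi / real N / 2) + 8 * real N + 8) \<le> L * (pi * W + 8 * real N + 8)"
    using L0 by (intro mult_left_mono) auto
  with core have "4 * W \<le> L * (pi * W + 8 * real N + 8)" by linarith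
  then have "4 * W * Co \<le> c * (pi * W + 8 * real N + 8)"
    unfolding L_def using Co0 by (simp add: field_simps)
  moreover have "W * q = 4 * W * Co - c * (pi * W)" unfolding q_def by (simp add: algebra_simps)
  ultimately show False using Wq q0 by (simp add: algebra_simps)
qed

theorem corollary4p1:
  shows "LE TYPE('z) TYPE(complex) \<le> 4 / pi \<and> LE TYPE(nat) TYPE(complex) = 4 / pi"
proof
  show "LE TYPE('z) TYPE(complex) \<le> 4 / pi" by (rule LE_upper)
  have "4 / pi \<le> LE TYPE(nat) TYPE(complex)"
    unfolding LE_def
  proof (rule cInf_greatest)
    have "cUp (2 * 1) \<in> {c. 0 \<le> c \<and> LE_const TYPE(nat) TYPE(complex) c}"
      using upper_LE_const[of "2 * 1" 1, OF refl] cUp_pos[of "2 * 1" 1, OF refl] by auto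
    then show "{c. 0 \<le> c \<and> LE_const TYPE(nat) TYPE(complex) c} \<noteq> {}" by blast
    fix c assume "c \<in> {c. 0 \<le> c \<and> LE_const TYPE(nat) TYPE(complex) c}"
    then show "4 / pi \<le> c" using lower_bound by blast
  qed
  then show "LE TYPE(nat) TYPE(complex) = 4 / pi" using LE_upper[where 'z = nat] by linarith
qed


end
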